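(* Let $1\leq p<\infty$, let $\kappa$ be a cardinal, and let $(X,\Sigma,\nu)$ be a relatively nonatomic measure space that admits a $\kappa$-separable partition. Then $L^{p}(\nu)$ is isometrically isomorphic to $\ell^{p}(\kappa,L^{p}[0,1])$.
   Context: An atom of $(X,\Sigma,\nu)$ is a set $A\in\Sigma$ with $\nu(A)>0$ such that every measurable $B\subset A$ has $\nu(B)\in\{0,\nu(A)\}$; the space is purely nonatomic if it has no atoms. $(X,\Sigma,\nu)$ is relatively nonatomic if for every $\sigma$-finite $E\in\Sigma$, the restricted space $(E,\{B\cap E:B\in\Sigma\},\nu)$ is purely nonatomic. A measurable set $Y$ is called separable if $L^p(Y,\nu)$ (restricted $\sigma$-algebra and measure) is separable for $1\le p<\infty$. A family $\{X_i: i\in J\}\subset\Sigma$ of $\sigma$-finite separable sets with $\nu(X_i)>0$ is a $\kappa$-separable partition if $|J|=\kappa$, $\nu(X_i\cap X_j)=0$ for distinct $i,j\in J$, and for every $E\in\Sigma$ with $\nu(E)<\infty$ one has $\nu(E)=\sum_{i\in J}\nu(E\cap X_i)$. For a cardinal $\kappa$ and Banach space $Z$, $\ell^{p}(\kappa,Z)$ is the space of families $(z_j)_{j\in J}$, $|J|=\kappa$, with $\sum_j\|z_j\|^p<\infty$ and norm $(\sum_j\|z_j\|^p)^{1/p}$. *)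

theory Defs
  imports "HOL-Analysis.Analysis"
begin

definition is_atom :: "'a measure \<Rightarrow> 'a set \<Rightarrow> bool" where
  "is_atom M A \<longleftrightarrow> A \<in> sets M \<and> emeasure M A > 0 \<and>
     (\<forall>B\<in>sets M. B \<subseteq> A \<longrightarrow> emeasure M B = 0 \<or> emeasure M B = emeasure M A)"

definition purely_nonatomic :: "'a measure \<Rightarrow> bool" where
  "purely_nonatomic M \<longleftrightarrow> (\<nexists>A. is_atom M A)"

definition sigma_finite_set :: "'a measure \<Rightarrow> 'a set \<Rightarrow> bool" where
  "sigma_finite_set M E \<longleftrightarrow> E \<in> sets M \<and>
     (\<exists>A :: nat \<Rightarrow> 'a set. range A \<subseteq> sets M \<and> \<Union>(range A) = E \<and>
        (\<forall>n. emeasure M (A n) < \<infinity>))"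

definition relatively_nonatomic :: "'a measure \<Rightarrow> bool" where
  "relatively_nonatomic M \<longleftrightarrow>
     (\<forall>E\<in>sets M. sigma_finite_set M E \<longrightarrow> purely_nonatomic (restrict_space M E))"

definition Lp_fun :: "'a measure \<Rightarrow> real \<Rightarrow> ('a \<Rightarrow> real) set" where
  "Lp_fun M p = {f. f \<in> borel_measurable M \<and> integrable M (\<lambda>x. \<bar>f x\<bar> powr p)}"

definition Lp_norm :: "'a measure \<Rightarrow> real \<Rightarrow> ('a \<Rightarrow> real) \<Rightarrow> real" where
  "Lp_norm M p f = (\<integral>x. \<bar>f x\<bar> powr p \<partial>M) powr (1 / p)"

definition Lp_separable :: "'a measure \<Rightarrow> real \<Rightarrow> bool" where
  "Lp_separable M p \<longleftrightarrow> (\<exists>D. countable D \<and> D \<subseteq> Lp_fun M p \<and>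
     (\<forall>f\<in>Lp_fun M p. \<forall>e>0. \<exists>d\<in>D. Lp_norm M p (\<lambda>x. f x - d x) < e))"

definition separable_set :: "'a measure \<Rightarrow> 'a set \<Rightarrow> bool" where
  "separable_set M Y \<longleftrightarrow> Y \<in> sets M \<and>
     (\<forall>p::real. 1 \<le> p \<longrightarrow> Lp_separable (restrict_space M Y) p)"

text \<open>A separable partition indexed by J (kappa = card of J).\<close>
definition separable_partition :: "'a measure \<Rightarrow> 'i set \<Rightarrow> ('i \<Rightarrow> 'a set) \<Rightarrow> bool" where
  "separable_partition M J Xs \<longleftrightarrow>
     (\<forall>i\<in>J. Xs i \<in> sets M \<and> sigma_finite_set M (Xs i) \<and> separable_set M (Xs i)
            \<and> emeasure M (Xs i) > 0) \<and>
     (\<forall>i\<in>J. \<forall>j\<in>J. i \<noteq> j \<longrightarrow> emeasure M (Xs i \<inter> Xs j) = 0) \<and>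
     (\<forall>E\<in>sets M. emeasure M E < \<infinity> \<longrightarrow>
        emeasure M E = (\<Sum>\<^sub>\<infinity>i\<in>J. emeasure M (E \<inter> Xs i)))"

abbreviation L01 :: "real measure" where
  "L01 \<equiv> lebesgue_on {0..1}"

definition lp_Lp01 :: "'i set \<Rightarrow> real \<Rightarrow> ('i \<Rightarrow> real \<Rightarrow> real) set" where
  "lp_Lp01 J p = {G. (\<forall>j\<in>J. G j \<in> Lp_fun L01 p) \<and>
                     (\<lambda>j. Lp_norm L01 p (G j) powr p) summable_on J}"

definition lp_Lp01_norm :: "'i set \<Rightarrow> real \<Rightarrow> ('i \<Rightarrow> real \<Rightarrow> real) \<Rightarrow> real" where
  "lp_Lp01_norm J p G = (\<Sum>\<^sub>\<infinity>j\<in>J. Lp_norm L01 p (G j) powr p) powr (1 / p)"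

definition lp_eq :: "'i set \<Rightarrow> ('i \<Rightarrow> real \<Rightarrow> real) \<Rightarrow> ('i \<Rightarrow> real \<Rightarrow> real) \<Rightarrow> bool" where
  "lp_eq J G H \<longleftrightarrow> (\<forall>j\<in>J. AE t in L01. G j t = H j t)"

text \<open>An isometric isomorphism L^p(M) \<rightarrow> l^p(J, L^p[0,1]), given on representatives:
  linear and isometric modulo a.e. equality (hence well defined and injective on
  equivalence classes), and surjective onto the equivalence classes.\<close>
definition isometric_iso_Lp_lp :: "'a measure \<Rightarrow> 'i set \<Rightarrow> real \<Rightarrow> (('a \<Rightarrow> real) \<Rightarrow> ('i \<Rightarrow> real \<Rightarrow> real)) \<Rightarrow> bool" where
  "isometric_iso_Lp_lp M J p T \<longleftrightarrow>
     (\<forall>f\<in>Lp_fun M p. T f \<in> lp_Lp01 J p) \<and>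
     (\<forall>f\<in>Lp_fun M p. \<forall>g\<in>Lp_fun M p. \<forall>a b::real.
        lp_eq J (T (\<lambda>x. a * f x + b * g x)) (\<lambda>j t. a * T f j t + b * T g j t)) \<and>
     (\<forall>f\<in>Lp_fun M p. lp_Lp01_norm J p (T f) = Lp_norm M p f) \<and>
     (\<forall>G\<in>lp_Lp01 J p. \<exists>f\<in>Lp_fun M p. lp_eq J (T f) G)"

end

theory Submission
  imports Defs "HOL-Probability.Probability"
begin


definition reprs :: "'a measure \<Rightarrow> ('a \<Rightarrow> real) \<Rightarrow> 'a set set" where
 "reprs N u = {A. A \<subseteq> space N \<and> (\<exists>B\<in>sets borel. AE x in N. (x \<in> A) = (u x \<in> B))}"

lemma reprs_sigma: "sigma_algebra (space N) (reprs N u)"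
  unfolding sigma_algebra_iff2
proof (intro conjI allI ballI impI)
  show "reprs N u \<subseteq> Pow (space N)" by (auto simp: reprs_def)
  show "{} \<in> reprs N u" unfolding reprs_def by (auto intro!: bexI[of _ "{}"])
next
  fix s assume "s \<in> reprs N u"
  then obtain B where B: "B \<in> sets borel" "AE x in N. (x \<in> s) = (u x \<in> B)" "s \<subseteq> space N"
    by (auto simp: reprs_def)
  have "AE x in N. (x \<in> space N - s) = (u x \<in> - B)" using B(2) AE_space by eventually_elim auto
  then show "space N - s \<in> reprs N u" unfolding reprs_def
    using B by (auto intro!: bexI[of _ "- B"])
next
  fix A :: "nat \<Rightarrow> 'a set" assume "range A \<subseteq> reprs N u"
  then have "\<forall>i. \<exists>B\<in>sets borel. AE x in N. (x \<in> A i) = (u x \<in> B)" and sub: "\<And>i. A i \<subseteq> space N"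
    by (auto simp: reprs_def)
  then obtain B where B: "\<And>i. B i \<in> sets borel" "\<And>i. AE x in N. (x \<in> A i) = (u x \<in> B i)"
    by metis
  have "AE x in N. \<forall>i. (x \<in> A i) = (u x \<in> B i)" using B(2) by (simp add: AE_all_countable)
  then have "AE x in N. (x \<in> (\<Union>i. A i)) = (u x \<in> (\<Union>i. B i))" by eventually_elim auto
  then show "(\<Union>i. A i) \<in> reprs N u" unfolding reprs_def using B(1) sub
    by (auto intro!: bexI[of _ "\<Union>i. B i"])
qed

definition reprM :: "'a measure \<Rightarrow> ('a \<Rightarrow> real) \<Rightarrow> 'a measure" where
  "reprM N u = measure_of (space N) (reprs N u) (\<lambda>_. 0)"

lemma sets_reprM[simp]: "sets (reprM N u) = reprs N u"
  unfolding reprM_def by (rule sigma_algebra.sets_measure_of_eq[OF reprs_sigma])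

lemma space_reprM[simp]: "space (reprM N u) = space N"
  unfolding reprM_def by (simp add: space_measure_of_conv)

lemma reprs_AE_cong:
  assumes "A \<subseteq> space N" "A' \<in> reprs N u" "AE x in N. (x \<in> A) = (x \<in> A')"
  shows "A \<in> reprs N u"
proof -
  obtain B where B: "B \<in> sets borel" "AE x in N. (x \<in> A') = (u x \<in> B)"
    using assms(2) by (auto simp: reprs_def)
  have "AE x in N. (x \<in> A) = (u x \<in> B)" using B(2) assms(3) by eventually_elim auto
  then show ?thesis unfolding reprs_def using assms(1) B(1)
    by (auto intro!: bexI[of _ B])
qed

lemma reprs_function_ennreal:
  fixes f :: "'a \<Rightarrow> ennreal"
  assumes sub: "sets N \<subseteq> reprs N u" and f: "f \<in> borel_measurable N"
  shows "\<exists>g\<in>borel_measurable borel. AE x in N. f x = g (u x)"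
  using f
proof (induction rule: borel_measurable_induct)
  case (cong f g)
  then obtain h where "h \<in> borel_measurable borel" "AE x in N. g x = h (u x)" by blast
  moreover have "AE x in N. f x = g x" using cong(3) by (auto intro: AE_I2)
  ultimately have "h \<in> borel_measurable borel" "AE x in N. f x = h (u x)" by (auto elim: AE_mp)
  then show ?case by blast
next
  case (set A)
  then have "A \<in> reprs N u" using sub by auto
  then obtain B where B: "B \<in> sets borel" "AE x in N. (x \<in> A) = (u x \<in> B)"
    by (auto simp: reprs_def)
  have "AE x in N. indicator A x = (indicator B (u x) :: ennreal)"
    using B(2) by eventually_elim (auto simp: indicator_def)
  then show ?case using B(1) by (intro bexI[of _ "indicator B"]) auto
next
  case (mult v c)
  then obtain h where h: "h \<in> borel_measurable borel" "AE x in N. v x = h (u x)" by blast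
  have "AE x in N. c * v x = c * h (u x)" using h(2) by eventually_elim auto
  then show ?case using h(1) by (intro bexI[of _ "\<lambda>t. c * h t"]) auto
next
  case (add v w)
  then obtain h1 where h1: "h1 \<in> borel_measurable borel" "AE x in N. v x = h1 (u x)" by blast
  from add obtain h2 where h2: "h2 \<in> borel_measurable borel" "AE x in N. w x = h2 (u x)" by blast
  have "AE x in N. w x + v x = h2 (u x) + h1 (u x)" using h1(2) h2(2) by eventually_elim auto
  then show ?case using h1(1) h2(1) by (intro bexI[of _ "\<lambda>t. h2 t + h1 t"]) auto
next
  case (seq U)
  then have "\<forall>i. \<exists>h\<in>borel_measurable borel. AE x in N. U i x = h (u x)" by blast
  then obtain h where h: "\<And>i. h i \<in> borel_measurable borel" "\<And>i. AE x in N. U i x = h i (u x)"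
    by metis
  have "AE x in N. \<forall>i. U i x = h i (u x)" using h(2) by (simp add: AE_all_countable)
  then have "AE x in N. (SUP i. U i) x = (SUP i. h i (u x))" by eventually_elim (simp add: image_comp)
  then show ?case using h(1) by (intro bexI[of _ "\<lambda>t. SUP i. h i t"]) auto
qed

lemma reprs_function:
  fixes f :: "'a \<Rightarrow> real"
  assumes sub: "sets N \<subseteq> reprs N u" and f: "f \<in> borel_measurable N"
  shows "\<exists>g\<in>borel_measurable borel. AE x in N. f x = g (u x)"
proof -
  obtain g1 where g1: "g1 \<in> borel_measurable borel" "AE x in N. ennreal (max 0 (f x)) = g1 (u x)"
    using reprs_function_ennreal[OF sub, of "\<lambda>x. ennreal (max 0 (f x))"] f by auto
  obtain g2 where g2: "g2 \<in> borel_measurable borel" "AE x in N. ennreal (max 0 (- f x)) = g2 (u x)"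
    using reprs_function_ennreal[OF sub, of "\<lambda>x. ennreal (max 0 (- f x))"] f by auto
  have "AE x in N. f x = enn2real (g1 (u x)) - enn2real (g2 (u x))"
    using g1(2) g2(2)
  proof eventually_elim
    case (elim x)
    then have "max 0 (f x) = enn2real (g1 (u x))" "max 0 (- f x) = enn2real (g2 (u x))"
      by (metis enn2real_ennreal max.cobounded1)+
    then show ?case by linarith
  qed
  then show ?thesis using g1(1) g2(1)
    by (intro bexI[of _ "\<lambda>t. enn2real (g1 t) - enn2real (g2 t)"]) auto
qed

lemma digit4:
  fixes b :: "nat \<Rightarrow> int" assumes b01: "\<And>k. b k = 0 \<or> b k = 1"
  shows "\<lfloor>4^(Suc n) * (\<Sum>k. real_of_int (b k) * (1/4)^(Suc k))\<rfloor> mod 4 = b n"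
proof -
  define a where "a k = real_of_int (b k) * (1/4)^(Suc k)" for k
  have a_nn: "0 \<le> a k" for k using b01[of k] by (auto simp: a_def)
  have a_le: "a k \<le> (1/4)^(Suc k)" for k using b01[of k] by (auto simp: a_def)
  have sg: "summable (\<lambda>k. (1/4::real)^(Suc k))" by (simp add: summable_geometric)
  have sa: "summable a" by (rule summable_comparison_test'[OF sg]) (use a_nn a_le in auto)
  have split: "(\<Sum>k. a k) = (\<Sum>k. a (k + Suc n)) + (\<Sum>k<Suc n. a k)"
    using suminf_split_initial_segment[OF sa, of "Suc n"] by simp
  define t where "t = (\<Sum>k. real_of_int (b (k + Suc n)) * (1/4)^(Suc k))"
  have "(4::real)^(Suc n) * a (k + Suc n) = real_of_int (b (k + Suc n)) * (1/4)^(Suc k)" for k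
    by (simp add: a_def power_add field_simps)
  note eq = this
  have "4^(Suc n) * (\<Sum>k. a (k + Suc n)) = (\<Sum>k. 4^(Suc n) * a (k + Suc n))"
    by (rule suminf_mult[symmetric]) (rule summable_ignore_initial_segment[OF sa])
  then have tail: "4^(Suc n) * (\<Sum>k. a (k + Suc n)) = t"
    unfolding t_def eq .
  have bk: "0 \<le> real_of_int (b k) * (1/4::real)^Suc m \<and> norm (real_of_int (b k) * (1/4::real)^Suc m) \<le> (1/4)^Suc m" for k m
    using b01[of k] by auto
  have t_nn: "0 \<le> t" unfolding t_def
    using bk by (intro suminf_nonneg summable_comparison_test'[OF sg, where N=0]) blast+
  have t_le: "t \<le> (\<Sum>k. (1/4::real)^(Suc k))" unfolding t_def
  proof (rule suminf_le)
    show "real_of_int (b (k + Suc n)) * (1/4)^(Suc k) \<le> (1/4)^(Suc k)" for k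
      using b01[of "k + Suc n"] by auto
    show "summable (\<lambda>k. real_of_int (b (k + Suc n)) * (1 / 4) ^ Suc k)"
      by (rule summable_comparison_test'[OF sg, where N=0]) (use bk in blast)
  qed (rule sg)
  have "(\<Sum>k. (1/4::real)^(Suc k)) = 1/3"
  proof -
    have "(\<lambda>k. (1/4::real) * (1/4)^k) sums (1/4 * (1/(1-1/4)))"
      by (rule sums_mult) (rule geometric_sums, simp)
    then show ?thesis by (simp add: sums_iff)
  qed
  then have t_lt: "t < 1" using t_le by simp
  define I where "I = (\<Sum>k<Suc n. b k * 4^(n - k))"
  have "(4::real)^(Suc n) * a k = real_of_int (b k * 4^(n-k))" if "k < Suc n" for k
  proof -
    have "(4::real)^(Suc n) = 4^(n-k) * 4^(Suc k)" using that by (simp flip: power_add)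
    then show ?thesis by (simp add: a_def field_simps)
  qed
  note hk = this
  have "4^(Suc n) * (\<Sum>k<Suc n. a k) = (\<Sum>k<Suc n. 4^(Suc n) * a k)"
    by (rule sum_distrib_left)
  also have "\<dots> = (\<Sum>k<Suc n. real_of_int (b k * 4^(n-k)))"
    by (rule sum.cong) (auto simp only: hk lessThan_iff)
  also have "\<dots> = real_of_int I" unfolding I_def by (simp only: of_int_sum)
  finally have head: "4^(Suc n) * (\<Sum>k<Suc n. a k) = real_of_int I" .
  have "4^(Suc n) * (\<Sum>k. a k) = real_of_int I + t"
    using split tail head by (simp add: distrib_left)
  then have fl: "\<lfloor>4^(Suc n) * (\<Sum>k. a k)\<rfloor> = I"
    using t_nn t_lt by (simp add: floor_unique)
  have "I = b n + 4 * (\<Sum>k<n. b k * 4^(n - Suc k))"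
  proof -
    have "(\<Sum>k<n. b k * 4^(n - k)) = 4 * (\<Sum>k<n. b k * 4^(n - Suc k))"
      by (simp add: sum_distrib_left) (intro sum.cong refl, simp add: Suc_diff_Suc mult.left_commute flip: power_Suc)
    then show ?thesis unfolding I_def by simp
  qed
  then have "I mod 4 = b n mod 4" by simp
  also have "\<dots> = b n" using b01[of n] by auto
  finally show ?thesis using fl by (simp add: a_def)
qed




lemma Lp_fun_diff:
  assumes p: "1 \<le> p" and f: "f \<in> Lp_fun N p" and g: "g \<in> Lp_fun N p"
  shows "(\<lambda>x. f x - g x) \<in> Lp_fun N p"
proof -
  have bnd: "\<bar>f x - g x\<bar> powr p \<le> 2 powr p * (\<bar>f x\<bar> powr p + \<bar>g x\<bar> powr p)" for x
  proof -
    have "\<bar>f x - g x\<bar> \<le> 2 * max \<bar>f x\<bar> \<bar>g x\<bar>" by auto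
    then have "\<bar>f x - g x\<bar> powr p \<le> (2 * max \<bar>f x\<bar> \<bar>g x\<bar>) powr p" using p by (intro powr_mono2) auto
    also have "\<dots> = 2 powr p * max \<bar>f x\<bar> \<bar>g x\<bar> powr p" by (simp add: powr_mult)
    also have "max \<bar>f x\<bar> \<bar>g x\<bar> powr p \<le> \<bar>f x\<bar> powr p + \<bar>g x\<bar> powr p" by (auto simp: max_def)
    then have "2 powr p * max \<bar>f x\<bar> \<bar>g x\<bar> powr p \<le> 2 powr p * (\<bar>f x\<bar> powr p + \<bar>g x\<bar> powr p)"
      by (intro mult_left_mono) auto
    finally show ?thesis .
  qed
  have fm[measurable]: "f \<in> borel_measurable N" and gm[measurable]: "g \<in> borel_measurable N"
    and fi: "integrable N (\<lambda>x. \<bar>f x\<bar> powr p)" and gi: "integrable N (\<lambda>x. \<bar>g x\<bar> powr p)"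
    using f g by (auto simp: Lp_fun_def)
  have "integrable N (\<lambda>x. 2 powr p * (\<bar>f x\<bar> powr p + \<bar>g x\<bar> powr p))"
    using fi gi by auto
  then have "integrable N (\<lambda>x. \<bar>f x - g x\<bar> powr p)"
    by (rule Bochner_Integration.integrable_bound) (use bnd in \<open>auto intro!: AE_I2\<close>)
  then show ?thesis by (auto simp: Lp_fun_def)
qed

lemma Lp_fun_indicator:
  assumes "A \<in> sets N" "emeasure N A < \<infinity>" "0 < p"
  shows "(indicator A :: 'a \<Rightarrow> real) \<in> Lp_fun N p"
proof -
  have "(\<lambda>x. \<bar>indicator A x :: real\<bar> powr p) = indicator A"
    using assms(3) by (auto simp: indicator_def fun_eq_iff)
  then show ?thesis using assms by (auto simp: Lp_fun_def)
qed


lemma reprs_of_limit_set: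
  assumes p: "1 \<le> p" and A: "A \<in> sets N" "emeasure N A < \<infinity>"
    and dm: "\<And>d. d \<in> DD \<Longrightarrow> d \<in> borel_measurable (reprM N h)"
    and DD: "DD \<subseteq> Lp_fun N p" "\<forall>f\<in>Lp_fun N p. \<forall>e>0. \<exists>d\<in>DD. Lp_norm N p (\<lambda>x. f x - d x) < e"
  shows "A \<in> reprs N h"
proof -
  have IA: "indicator A \<in> Lp_fun N p" using A p by (intro Lp_fun_indicator) auto
  have "\<forall>k::nat. \<exists>d\<in>DD. Lp_norm N p (\<lambda>x. indicator A x - d x) < 1 / Suc k"
    using DD(2) IA by auto
  then obtain d where d: "\<And>k. d k \<in> DD" "\<And>k. Lp_norm N p (\<lambda>x. indicator A x - d k x) < 1 / Suc k"
    by metis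
  define u where "u = (\<lambda>k x. \<bar>indicator A x - d k x\<bar> powr p)"
  have dL: "(\<lambda>x. indicator A x - d k x) \<in> Lp_fun N p" for k
    using Lp_fun_diff[OF p IA] d(1) DD(1) by auto
  have ui: "integrable N (u k)" for k using dL[of k] by (simp add: Lp_fun_def u_def)
  have u_nn: "0 \<le> u k x" for k x by (simp add: u_def)
  have ule: "integral\<^sup>L N (u k) \<le> 1 / Suc k" for k
  proof -
    have I0: "0 \<le> integral\<^sup>L N (u k)" by (simp add: u_nn)
    have "integral\<^sup>L N (u k) powr (1/p) < 1 / Suc k"
      using d(2)[of k] by (simp add: Lp_norm_def u_def)
    then have "(integral\<^sup>L N (u k) powr (1/p)) powr p < (1 / Suc k) powr p"
      using p by (intro powr_less_mono2) auto
    then have "integral\<^sup>L N (u k) < (1 / Suc k) powr p"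
      using p I0 by (simp add: powr_powr)
    also have "(1 / Suc k) powr p \<le> (1 / Suc k) powr 1"
      using p by (intro powr_mono') auto
    finally show ?thesis by simp
  qed
  have "(\<lambda>k. \<integral>x. norm (u k x) \<partial>N) \<longlonglongrightarrow> 0"
  proof (rule tendsto_sandwich[of "\<lambda>_. 0" _ _ "\<lambda>k. 1 / Suc k"])
    show "\<forall>\<^sub>F n in sequentially. 0 \<le> (\<integral>x. norm (u n x) \<partial>N)" by auto
    show "\<forall>\<^sub>F n in sequentially. (\<integral>x. norm (u n x) \<partial>N) \<le> 1 / Suc n"
      using ule u_nn by (auto)
    show "(\<lambda>n. 1 / real (Suc n)) \<longlonglongrightarrow> 0" by (rule LIMSEQ_inverse_real_of_nat[unfolded inverse_eq_divide])
  qed auto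
  then obtain r where r: "strict_mono r" "AE x in N. (\<lambda>k. u (r k) x) \<longlonglongrightarrow> 0"
    using tendsto_L1_AE_subseq[of N u] ui by blast
  have conv: "AE x in N. (\<lambda>k. d (r k) x) \<longlonglongrightarrow> indicator A x"
    using r(2)
  proof eventually_elim
    case (elim x)
    have "(\<lambda>k. u (r k) x powr (1/p)) \<longlonglongrightarrow> 0"
      using p by (intro tendsto_zero_powrI[OF elim]) (auto simp: u_nn)
    moreover have "u (r k) x powr (1/p) = \<bar>indicator A x - d (r k) x\<bar>" for k
      using p by (simp add: u_def powr_powr)
    ultimately have "(\<lambda>k. \<bar>indicator A x - d (r k) x\<bar>) \<longlonglongrightarrow> 0" by simp
    then have "(\<lambda>k. d (r k) x - indicator A x) \<longlonglongrightarrow> 0"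
      by (subst tendsto_rabs_zero_iff[symmetric]) (simp add: abs_minus_commute)
    then show ?case by (simp add: LIM_zero_iff)
  qed
  define A' where "A' = {x\<in>space N. 1/2 < lim (\<lambda>k. d (r k) x)}"
  have "(\<lambda>x. lim (\<lambda>k. d (r k) x)) \<in> borel_measurable (reprM N h)"
    using dm d(1) by (intro borel_measurable_lim_metric) auto
  then have "A' \<in> sets (reprM N h)" unfolding A'_def
    by (metis (no_types, lifting) Collect_cong borel_measurable_iff_greater space_reprM)
  then have A'r: "A' \<in> reprs N h" by simp
  have "AE x in N. (x \<in> A) = (x \<in> A')"
    using conv AE_space
  proof eventually_elim
    case (elim x)
    then have "lim (\<lambda>k. d (r k) x) = indicator A x" using limI by blast
    then show ?case using elim by (auto simp: A'_def indicator_def)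
  qed
  then show ?thesis by (rule reprs_AE_cong[OF sets.sets_into_space[OF A(1)] A'r])
qed


lemma exists_generator:
  assumes p: "1 \<le> p" and sf: "sigma_finite_measure N" and sep: "Lp_separable N p"
  shows "\<exists>h\<in>borel_measurable N. sets N \<subseteq> reprs N h"
proof -
  obtain DD where DD: "countable DD" "DD \<subseteq> Lp_fun N p"
    "\<forall>f\<in>Lp_fun N p. \<forall>e>0. \<exists>d\<in>DD. Lp_norm N p (\<lambda>x. f x - d x) < e"
    using sep by (auto simp: Lp_separable_def)
  define Gs where "Gs = insert {} ((\<lambda>(d,q). {x\<in>space N. q < d x}) ` (DD \<times> \<rat>))"
  have cG: "countable Gs" using DD(1) countable_rat unfolding Gs_def by (intro countable_insert countable_image countable_SIGMA) auto
  define G where "G = from_nat_into Gs"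
  have "Gs \<noteq> {}" by (simp add: Gs_def)
  then have rG: "range G = Gs" unfolding G_def using cG by (rule range_from_nat_into)
  have dmeas: "d \<in> borel_measurable N" if "d \<in> DD" for d
    using that DD(2) by (auto simp: Lp_fun_def)
  have GsN: "X \<in> sets N" if "X \<in> Gs" for X
    using that dmeas by (auto simp: Gs_def)
  have Gsets[measurable]: "G n \<in> sets N" for n using GsN rG by auto
  define b where "b = (\<lambda>k x. if x \<in> G k then 1 else 0 :: int)"
  define h where "h = (\<lambda>x. \<Sum>k. real_of_int (b k x) * (1/4)^Suc k)"
  have hm: "h \<in> borel_measurable N" unfolding h_def b_def
    by (intro borel_measurable_suminf) (auto simp: of_int_def)
  have digit: "x \<in> G n \<longleftrightarrow> \<lfloor>4^Suc n * h x\<rfloor> mod 4 = 1" for x n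
    using digit4[of "\<lambda>k. b k x" n] by (auto simp: h_def b_def)
  have Gr: "G n \<in> reprs N h" for n
  proof -
    define B where "B = {t::real. \<lfloor>4^Suc n * t\<rfloor> mod 4 = 1}"
    have "(\<lambda>t::real. \<lfloor>4^Suc n * t\<rfloor> mod 4) \<in> measurable borel (count_space UNIV)"
      by measurable
    then have "B \<in> sets borel" unfolding B_def
      using measurable_sets[of _ borel "count_space UNIV" "{1::int}"] by (auto simp: vimage_def)
    moreover have "AE x in N. (x \<in> G n) = (h x \<in> B)" by (auto simp: B_def digit)
    ultimately show ?thesis unfolding reprs_def using sets.sets_into_space[OF Gsets[of n]] by blast
  qed
  have dm: "d \<in> borel_measurable (reprM N h)" if "d \<in> DD" for d
    unfolding borel_measurable_iff_greater
  proof
    fix a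
    have eq: "{x\<in>space (reprM N h). a < d x} = (\<Union>q\<in>{q\<in>\<rat>. a < q}. {x\<in>space N. q < d x})"
    proof (intro set_eqI iffI)
      fix x assume "x \<in> {x\<in>space (reprM N h). a < d x}"
      then have x: "x \<in> space N" "a < d x" by auto
      then obtain q where "q \<in> \<rat>" "a < q" "q < d x" using Rats_dense_in_real[of a "d x"] by blast
      then show "x \<in> (\<Union>q\<in>{q\<in>\<rat>. a < q}. {x\<in>space N. q < d x})" using x by blast
    qed auto
    have "{x\<in>space N. q < d x} \<in> sets (reprM N h)" if "q \<in> \<rat>" for q
    proof -
      have "{x\<in>space N. q < d x} \<in> Gs" using that \<open>d \<in> DD\<close> by (auto simp: Gs_def)
      then show ?thesis using Gr rG by auto
    qed
    then have "(\<Union>q\<in>{q\<in>\<rat>. a < q}. {x\<in>space N. q < d x}) \<in> sets (reprM N h)"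
      by (intro sets.countable_UN') (auto intro: countable_subset[OF _ countable_rat])
    then show "{x\<in>space (reprM N h). a < d x} \<in> sets (reprM N h)" using eq by simp
  qed
  have fin: "A \<in> reprs N h" if "A \<in> sets N" "emeasure N A < \<infinity>" for A
    using reprs_of_limit_set[OF p that dm DD(2,3)] by blast
  from sigma_finite_measure.sigma_finite[OF sf] obtain C :: "nat \<Rightarrow> 'a set" where C: "range C \<subseteq> sets N" "(\<Union>i. C i) = space N" "\<And>i. emeasure N (C i) \<noteq> \<infinity>"
    by metis
  have "A \<in> reprs N h" if A: "A \<in> sets N" for A
  proof -
    have "A \<inter> C i \<in> reprs N h" for i
    proof (rule fin)
      show "A \<inter> C i \<in> sets N" using A C(1) by auto
      have "emeasure N (A \<inter> C i) \<le> emeasure N (C i)" using C(1) by (intro emeasure_mono) auto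
      then show "emeasure N (A \<inter> C i) < \<infinity>" using C(3)[of i] by (simp add: less_top)
    qed
    then have "(\<Union>i. A \<inter> C i) \<in> sets (reprM N h)" by (intro sets.countable_UN) auto
    moreover have "(\<Union>i. A \<inter> C i) = A" using C(2) sets.sets_into_space[OF A] by auto
    ultimately show ?thesis by simp
  qed
  then show ?thesis using hm by blast
qed


lemma level_null:
  assumes na: "purely_nonatomic N" and sub: "sets N \<subseteq> reprs N h" and hm[measurable]: "h \<in> borel_measurable N"
  shows "emeasure N {x\<in>space N. h x = c} = 0"
proof (rule ccontr)
  define E where "E = {x\<in>space N. h x = c}"
  have E[measurable]: "E \<in> sets N" unfolding E_def by measurable
  assume "emeasure N {x\<in>space N. h x = c} \<noteq> 0"
  then have pos: "emeasure N E > 0" by (simp add: E_def zero_less_iff_neq_zero)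
  have "\<not> is_atom N E" using na by (auto simp: purely_nonatomic_def)
  then obtain B where B: "B \<in> sets N" "B \<subseteq> E" "emeasure N B \<noteq> 0" "emeasure N B \<noteq> emeasure N E"
    using pos E by (auto simp: is_atom_def)
  then have "B \<in> reprs N h" using sub by auto
  then obtain C where C: "C \<in> sets borel" "AE x in N. (x \<in> B) = (h x \<in> C)" by (auto simp: reprs_def)
  show False
  proof (cases "c \<in> C")
    case True
    have "AE x in N. (x \<in> B) = (x \<in> E)" using C(2) by eventually_elim (use B(2) True in \<open>auto simp: E_def\<close>)
    then have "emeasure N B = emeasure N E" using B(1) E by (rule emeasure_eq_AE)
    then show False using B(4) by simp
  next
    case False
    have "AE x in N. x \<notin> B" using C(2) by eventually_elim (use B(2) False in \<open>auto simp: E_def\<close>)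
    then have "emeasure N {x\<in>space N. x \<in> B} = 0" using B(1) by (simp add: AE_iff_measurable[OF _ refl])
    moreover have "{x\<in>space N. x \<in> B} = B" using sets.sets_into_space[OF B(1)] by auto
    ultimately have "emeasure N B = 0" by simp
    then show False using B(3) by simp
  qed
qed

lemma level_set:
  fixes F :: "real \<Rightarrow> real"
  assumes cont: "\<And>x. isCont F x" and mono: "mono F" and top: "(F \<longlongrightarrow> 1) at_top"
    and a: "F a \<le> y" and y: "y < 1"
  shows "\<exists>m. (\<forall>x. F x \<le> y \<longleftrightarrow> x \<le> m) \<and> F m = y"
proof -
  define L where "L = {x. F x \<le> y}"
  have cF: "continuous_on UNIV F" using cont by (simp add: continuous_at_imp_continuous_on)
  have ne: "L \<noteq> {}" using a by (auto simp: L_def)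
  have "eventually (\<lambda>x. y < F x) at_top" using order_tendstoD(1)[OF top y] .
  then obtain b where b: "\<And>x. x \<ge> b \<Longrightarrow> y < F x" by (auto simp: eventually_at_top_linorder)
  have bdd: "bdd_above L" unfolding L_def bdd_above_def
  proof (rule exI[of _ b], intro ballI)
    fix x assume "x \<in> {x. F x \<le> y}"
    then show "x \<le> b" using b[of x] by (cases "x \<le> b") auto
  qed
  have clL: "closed L" unfolding L_def using cF by (intro closed_Collect_le) (auto intro: continuous_intros)
  define m where "m = Sup L"
  have mL: "m \<in> L" unfolding m_def using ne bdd clL by (rule closed_contains_Sup)
  have iff: "F x \<le> y \<longleftrightarrow> x \<le> m" for x
  proof
    assume "F x \<le> y" then show "x \<le> m" unfolding m_def using bdd by (intro cSup_upper) (auto simp: L_def)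
  next
    assume "x \<le> m" then have "F x \<le> F m" using mono by (simp add: monoD)
    then show "F x \<le> y" using mL by (auto simp: L_def)
  qed
  have clU: "closed {x. y \<le> F x}" using cF by (intro closed_Collect_le) (auto intro: continuous_intros)
  have "{m<..} \<subseteq> {x. y \<le> F x}"
  proof
    fix x assume "x \<in> {m<..}"
    then have "\<not> F x \<le> y" using iff[of x] by auto
    then show "x \<in> {x. y \<le> F x}" by auto
  qed
  then have "closure {m<..} \<subseteq> {x. y \<le> F x}" using clU by (rule closure_minimal)
  then have "y \<le> F m" by auto
  moreover have "F m \<le> y" using mL by (auto simp: L_def)
  ultimately show ?thesis using iff by (intro exI[of _ m]) auto
qed

lemma weight_exists:
  assumes sf: "sigma_finite_measure N" and pos: "emeasure N (space N) > 0"
  shows "\<exists>w\<in>borel_measurable N. (\<forall>x\<in>space N. 0 < w x) \<and> (\<integral>\<^sup>+x. ennreal (w x) \<partial>N) = 1"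
proof -
  obtain w0 where w0: "w0 \<in> borel_measurable N" "integral\<^sup>N N w0 \<noteq> \<infinity>" "\<And>x. x \<in> space N \<Longrightarrow> 0 < w0 x \<and> w0 x < \<infinity>"
    using sigma_finite_measure.Ex_finite_integrable_function[OF sf] by blast
  define c where "c = integral\<^sup>N N w0"
  have c0: "c \<noteq> 0"
  proof
    assume "c = 0"
    then have "AE x in N. w0 x = 0" using w0(1) by (simp add: c_def nn_integral_0_iff_AE)
    then have "AE x in N. False" using AE_space by eventually_elim (use w0(3) in force)
    then have "ae_filter N = bot" using trivial_limit_def by blast
    then show False using pos by (simp add: ae_filter_eq_bot_iff)
  qed
  define w where "w x = enn2real (w0 x) / enn2real c" for x
  have cr: "c = ennreal (enn2real c)" using w0(2) unfolding c_def by (simp add: ennreal_enn2real_if)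
  have crpos: "0 < enn2real c" using c0 w0(2) by (simp add: c_def enn2real_positive_iff less_top zero_less_iff_neq_zero)
  have wm: "w \<in> borel_measurable N" unfolding w_def using w0(1) by measurable
  have wpos: "\<forall>x\<in>space N. 0 < w x" unfolding w_def using w0(3) crpos
    by (auto simp: enn2real_positive_iff less_top)
  have "ennreal (w x) = w0 x / c" if "x \<in> space N" for x
  proof -
    have "ennreal (w x) = ennreal (enn2real (w0 x)) / ennreal (enn2real c)"
      unfolding w_def using crpos by (simp add: divide_ennreal)
    also have "ennreal (enn2real (w0 x)) = w0 x" using w0(3)[OF that] by (simp add: less_top)
    finally show ?thesis using cr by simp
  qed
  then have "(\<integral>\<^sup>+x. ennreal (w x) \<partial>N) = (\<integral>\<^sup>+x. w0 x / c \<partial>N)" by (intro nn_integral_cong) auto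
  also have "\<dots> = c / c" unfolding c_def using w0(1) by (rule nn_integral_divide)
  also have "\<dots> = 1" using c0 w0(2) by (intro ennreal_divide_self) (auto simp: c_def less_top)
  finally show ?thesis using wm wpos by blast
qed




lemma uniformizer:
  assumes p: "1 \<le> p" and sf: "sigma_finite_measure N" and na: "purely_nonatomic N"
    and sep: "Lp_separable N p" and pos: "emeasure N (space N) > 0"
  shows "\<exists>\<phi> w. \<phi> \<in> borel_measurable N \<and> w \<in> borel_measurable N \<and> (\<forall>x\<in>space N. 0 < w x) \<and>
     sets N \<subseteq> reprs N \<phi> \<and>
     (\<forall>g\<in>borel_measurable borel. (\<integral>\<^sup>+t. g t \<partial>L01) = (\<integral>\<^sup>+x. ennreal (w x) * g (\<phi> x) \<partial>N))"
proof -
  obtain h where hm[measurable]: "h \<in> borel_measurable N" and hr: "sets N \<subseteq> reprs N h"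
    using exists_generator[OF p sf sep] by blast
  obtain w where wm[measurable]: "w \<in> borel_measurable N" and wpos: "\<forall>x\<in>space N. 0 < w x"
    and w1: "(\<integral>\<^sup>+x. ennreal (w x) \<partial>N) = 1"
    using weight_exists[OF sf pos] by blast
  define P where "P = density N (\<lambda>x. ennreal (w x))"
  have sP[simp]: "sets P = sets N" "space P = space N" by (simp_all add: P_def)
  have "emeasure P (space P) = (\<integral>\<^sup>+x. ennreal (w x) * indicator (space N) x \<partial>N)"
    unfolding P_def by (simp add: emeasure_density)
  also have "\<dots> = 1" unfolding w1[symmetric] by (intro nn_integral_cong) auto
  finally have "emeasure P (space P) = 1" .
  then interpret P: prob_space P by (rule prob_spaceI)
  have hP[measurable]: "h \<in> borel_measurable P" using hm by (simp add: measurable_cong_sets[OF sP(1) refl])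
  have nullP: "AE x in N. x \<notin> S" if "S \<in> sets N" "emeasure P S = 0" for S
  proof -
    have "S \<in> null_sets P" using that by (simp add: null_sets_def)
    then have "AE x in N. x \<in> S \<longrightarrow> ennreal (w x) = 0" unfolding P_def
      by (subst (asm) null_sets_density_iff) auto
    then show ?thesis using AE_space by eventually_elim (use wpos in auto)
  qed
  have Pnull: "emeasure P S = 0" if "S \<in> sets N" "emeasure N S = 0" for S
  proof -
    have "AE x in N. x \<in> S \<longrightarrow> ennreal (w x) = 0"
      using AE_not_in[of S N] that by (auto simp: null_sets_def elim!: AE_mp)
    then have "S \<in> null_sets P" unfolding P_def using that by (subst null_sets_density_iff) auto
    then show ?thesis by auto
  qed
  define \<mu> where "\<mu> = distr P borel h"
  interpret \<mu>: real_distribution \<mu> unfolding \<mu>_def by (rule P.real_distribution_distr) simp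
  define F where "F = cdf \<mu>"
  have F_eq: "F c = P.prob {x\<in>space N. h x \<le> c}" for c
    unfolding F_def cdf_def \<mu>_def by (simp add: measure_distr vimage_def Int_def conj_commute)
  have cont: "isCont F c" for c
  proof -
    have "emeasure P {x\<in>space N. h x = c} = 0"
      by (rule Pnull) (auto intro: level_null[OF na hr hm])
    then have "measure \<mu> {c} = 0" unfolding \<mu>_def
      by (simp add: emeasure_distr vimage_def Int_def conj_commute measure_def)
    then show ?thesis unfolding F_def by (simp add: \<mu>.isCont_cdf)
  qed
  have Fmono: "mono F" unfolding F_def by (auto intro: monoI \<mu>.cdf_nondecreasing)
  have Ftop: "(F \<longlongrightarrow> 1) at_top" unfolding F_def by (rule \<mu>.cdf_lim_at_top_prob)
  have Fbot: "(F \<longlongrightarrow> 0) at_bot" unfolding F_def by (rule \<mu>.cdf_lim_at_bot)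
  have Fle1: "F c \<le> 1" for c unfolding F_def by (rule \<mu>.cdf_bounded_prob)
  have Fm[measurable]: "F \<in> borel_measurable borel" using Fmono by (rule borel_measurable_mono)
  define \<phi> where "\<phi> x = F (h x)" for x
  have \<phi>m[measurable]: "\<phi> \<in> borel_measurable N" unfolding \<phi>_def by measurable
  have \<phi>P[measurable]: "\<phi> \<in> borel_measurable P" using \<phi>m by (simp add: measurable_cong_sets[OF sP(1) refl])
  have distr: "\<P>(x in P. \<phi> x \<le> t) = t" if t: "0 \<le> t" "t \<le> 1" for t
  proof (cases "t = 1")
    case True
    have "{x\<in>space P. \<phi> x \<le> t} = space P" using Fle1 True by (auto simp: \<phi>_def)
    then show ?thesis using True P.prob_space by simp
  next
    case False
    then have t1: "t < 1" using t by simp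
    show ?thesis
    proof (cases "\<exists>a. F a \<le> t")
      case True
      then obtain a where "F a \<le> t" by blast
      from level_set[OF cont Fmono Ftop this t1] obtain m where m: "\<And>x. F x \<le> t \<longleftrightarrow> x \<le> m" "F m = t"
        by blast
      have "{x\<in>space P. \<phi> x \<le> t} = {x\<in>space N. h x \<le> m}" using m(1) by (auto simp: \<phi>_def)
      then show ?thesis using F_eq[of m] m(2) by simp
    next
      case False
      then have Fgt: "\<And>a. t < F a" by (simp add: not_le)
      have "t = 0"
      proof (rule ccontr)
        assume "t \<noteq> 0"
        then have "0 < t" using t by simp
        then have "eventually (\<lambda>a. F a < t) at_bot" using order_tendstoD(2)[OF Fbot] by blast
        then obtain a where "F a < t" by (auto simp: eventually_at_bot_linorder)
        then show False using Fgt[of a] by simp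
      qed
      moreover have e: "{x\<in>space P. \<phi> x \<le> t} = {}" using Fgt by (auto simp: \<phi>_def not_le)
      ultimately show ?thesis unfolding e by simp
    qed
  qed
  have dist: "distributed P lborel \<phi> (\<lambda>x. indicator {0..1} x / measure lborel {0..1::real})"
    by (rule P.uniform_distrI_borel_atLeastAtMost) (use \<phi>P distr in auto)
  have transfer: "(\<integral>\<^sup>+t. g t \<partial>L01) = (\<integral>\<^sup>+x. ennreal (w x) * g (\<phi> x) \<partial>N)"
    if gm[measurable]: "g \<in> borel_measurable borel" for g :: "real \<Rightarrow> ennreal"
  proof -
    have "(\<integral>\<^sup>+x. ennreal (w x) * g (\<phi> x) \<partial>N) = (\<integral>\<^sup>+x. g (\<phi> x) \<partial>P)"
      unfolding P_def by (subst nn_integral_density) auto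
    also have "\<dots> = (\<integral>\<^sup>+t. g t \<partial>distr P lborel \<phi>)"
      by (subst nn_integral_distr) auto
    also have "distr P lborel \<phi> = density lborel (\<lambda>x. indicator {0..1} x / measure lborel {0..1::real})"
      using dist by (simp add: distributed_def)
    also have "(\<integral>\<^sup>+t. g t \<partial>density lborel (\<lambda>x. indicator {0..1} x / measure lborel {0..1::real}))
        = (\<integral>\<^sup>+t. g t * indicator {0..1} t \<partial>lborel)"
      by (subst nn_integral_density) (auto intro!: nn_integral_cong simp: indicator_def)
    also have "\<dots> = (\<integral>\<^sup>+t. g t * indicator {0..1} t \<partial>lebesgue)"
      by (simp add: nn_integral_completion)
    also have "\<dots> = (\<integral>\<^sup>+t. g t \<partial>L01)"
      by (subst nn_integral_restrict_space) auto
    finally show ?thesis by simp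
  qed
  have lev: "{x\<in>space N. h x \<le> c} \<in> reprs N \<phi>" for c
  proof -
    have "AE x in N. (h x \<le> c) = (\<phi> x \<le> F c)"
    proof (cases "F c < 1")
      case True
      from level_set[OF cont Fmono Ftop order_refl True] obtain m where
        m: "\<And>x. F x \<le> F c \<longleftrightarrow> x \<le> m" "F m = F c" by blast
      have cm: "c \<le> m" using m(1)[of c] by simp
      define S where "S = {x\<in>space N. h x \<le> m} - {x\<in>space N. h x \<le> c}"
      have S[measurable]: "S \<in> sets N" unfolding S_def by measurable
      have "P.prob S = P.prob {x\<in>space N. h x \<le> m} - P.prob {x\<in>space N. h x \<le> c}"
        unfolding S_def by (rule P.finite_measure_Diff) (use cm in auto)
      also have "\<dots> = 0" using F_eq[of m] F_eq[of c] m(2) by simp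
      finally have "emeasure P S = 0" by (simp add: P.emeasure_eq_measure)
      from nullP[OF S this] AE_space show ?thesis
      proof eventually_elim
        case (elim x)
        show ?case
        proof
          assume "h x \<le> c" then show "\<phi> x \<le> F c" unfolding \<phi>_def using Fmono by (simp add: monoD)
        next
          assume "\<phi> x \<le> F c" then have "h x \<le> m" using m(1)[of "h x"] by (simp add: \<phi>_def)
          then show "h x \<le> c" using elim by (simp add: S_def)
        qed
      qed
    next
      case False
      then have Fc: "F c = 1" using Fle1[of c] by simp
      define S where "S = space N - {x\<in>space N. h x \<le> c}"
      have S[measurable]: "S \<in> sets N" unfolding S_def by measurable
      have "P.prob S = 1 - P.prob {x\<in>space N. h x \<le> c}"
        unfolding S_def using P.prob_compl[of "{x\<in>space N. h x \<le> c}"] by simp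
      also have "\<dots> = 0" using F_eq[of c] Fc by simp
      finally have "emeasure P S = 0" by (simp add: P.emeasure_eq_measure)
      from nullP[OF S this] AE_space show ?thesis
      proof eventually_elim
        case (elim x)
        then have "h x \<le> c" by (simp add: S_def)
        moreover have "\<phi> x \<le> F c" using Fle1[of "h x"] Fc by (simp add: \<phi>_def)
        ultimately show ?case by simp
      qed
    qed
    then have "AE x in N. (x \<in> {x\<in>space N. h x \<le> c}) = (\<phi> x \<in> {..F c})"
      using AE_space by eventually_elim auto
    moreover have "{..F c} \<in> sets borel" by simp
    ultimately show ?thesis unfolding reprs_def by blast
  qed
  have hR: "h \<in> borel_measurable (reprM N \<phi>)"
    unfolding borel_measurable_iff_le using lev by simp
  have "A \<in> reprs N \<phi>" if A: "A \<in> sets N" for A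
  proof -
    obtain C where C: "C \<in> sets borel" "AE x in N. (x \<in> A) = (h x \<in> C)"
      using hr A by (auto simp: reprs_def)
    have "h -` C \<inter> space N \<in> sets (reprM N \<phi>)"
      using measurable_sets[OF hR, of C] C(1) by simp
    then have "h -` C \<inter> space N \<in> reprs N \<phi>" by simp
    moreover have "AE x in N. (x \<in> A) = (x \<in> h -` C \<inter> space N)"
      using C(2) AE_space by eventually_elim auto
    ultimately show ?thesis by (rule reprs_AE_cong[OF sets.sets_into_space[OF A]])
  qed
  then show ?thesis using \<phi>m wm wpos transfer by blast
qed




lemma borel_L01: "g \<in> measurable borel M \<Longrightarrow> g \<in> measurable L01 M"
  by (intro measurable_restrict_space1 measurable_completion) simp

lemma L01_borel_rep:
  fixes G :: "real \<Rightarrow> real"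
  assumes G: "G \<in> borel_measurable L01"
  shows "\<exists>g\<in>borel_measurable borel. AE t in L01. G t = g t"
proof -
  have "(\<lambda>t. indicator {0..1} t *\<^sub>R G t) \<in> borel_measurable lebesgue"
    using G by (subst (asm) borel_measurable_restrict_space_iff) auto
  from completion_ex_borel_measurable_real[OF this] obtain g where
    g: "g \<in> borel_measurable lborel" "AE t in lborel. indicator {0..1} t *\<^sub>R G t = g t" by blast
  have "AE t in lebesgue. indicator {0..1} t *\<^sub>R G t = g t" using g(2) by (rule AE_completion)
  then have "AE t in lebesgue. t \<in> {0..1} \<longrightarrow> G t = g t" by eventually_elim (auto simp: indicator_def)
  then have "AE t in L01. G t = g t" by (subst AE_restrict_space_iff) auto
  then show ?thesis using g(1) by auto
qed

lemma L01_pred: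
  assumes "{t. Q t} \<in> sets borel"
  shows "{t\<in>space L01. Q t} \<in> sets L01"
proof -
  have "(indicator {t. Q t} :: real \<Rightarrow> real) \<in> borel_measurable L01"
    using assms by (intro borel_L01) simp
  then have "(indicator {t. Q t} :: real \<Rightarrow> real) -` {1} \<inter> space L01 \<in> sets L01"
    by (rule measurable_sets) simp
  also have "(indicator {t. Q t} :: real \<Rightarrow> real) -` {1} \<inter> space L01 = {t\<in>space L01. Q t}"
    by (auto simp: indicator_def)
  finally show ?thesis .
qed


lemma piece_iso:
  assumes p: "1 \<le> p" and sf: "sigma_finite_measure N" and na: "purely_nonatomic N"
    and sep: "Lp_separable N p" and pos: "emeasure N (space N) > 0"
  shows "\<exists>T. (\<forall>f\<in>Lp_fun N p. T f \<in> Lp_fun L01 p) \<and>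
    (\<forall>f\<in>Lp_fun N p. \<forall>g\<in>Lp_fun N p. \<forall>a b::real. AE t in L01. T (\<lambda>x. a * f x + b * g x) t = a * T f t + b * T g t) \<and>
    (\<forall>f\<in>Lp_fun N p. Lp_norm L01 p (T f) = Lp_norm N p f) \<and>
    (\<forall>G\<in>Lp_fun L01 p. \<exists>f\<in>Lp_fun N p. AE t in L01. T f t = G t)"
proof -
  obtain \<phi> w where \<phi>m[measurable]: "\<phi> \<in> borel_measurable N" and wm[measurable]: "w \<in> borel_measurable N"
    and wpos: "\<forall>x\<in>space N. 0 < w x" and rep: "sets N \<subseteq> reprs N \<phi>"
    and transfer: "\<And>g. g \<in> borel_measurable borel \<Longrightarrow> (\<integral>\<^sup>+t. g t \<partial>L01) = (\<integral>\<^sup>+x. ennreal (w x) * g (\<phi> x) \<partial>N)"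
    using uniformizer[OF p sf na sep pos] by blast
  define W where "W x = w x powr (1/p)" for x
  have Wpos: "0 < W x" if "x \<in> space N" for x
  proof -
    have "0 < w x" using wpos that by auto
    then show ?thesis by (simp add: W_def)
  qed
  have Wm[measurable]: "W \<in> borel_measurable N" unfolding W_def by measurable
  define R where "R f g \<longleftrightarrow> g \<in> borel_measurable borel \<and> (AE x in N. f x = g (\<phi> x) * W x)" for f g
  have exR: "\<exists>g. R f g" if fm: "f \<in> borel_measurable N" for f
  proof -
    have "(\<lambda>x. f x / W x) \<in> borel_measurable N" using fm by measurable
    from reprs_function[OF rep this] obtain g where
      g: "g \<in> borel_measurable borel" "AE x in N. f x / W x = g (\<phi> x)" by blast
    have "AE x in N. f x = g (\<phi> x) * W x" using g(2) AE_space
      by eventually_elim (use Wpos in \<open>force simp: field_simps\<close>)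
    then show ?thesis using g(1) unfolding R_def by blast
  qed
  define T where "T f = (SOME g. R f g)" for f
  have TR: "R f (T f)" if "f \<in> borel_measurable N" for f
    unfolding T_def using exR[OF that] by (rule someI_ex)
  have Rm: "g \<in> borel_measurable borel" if "R f g" for f g using that by (simp add: R_def)
  have Rnorm: "(\<integral>\<^sup>+t. ennreal (\<bar>g t\<bar> powr p) \<partial>L01) = (\<integral>\<^sup>+x. ennreal (\<bar>f x\<bar> powr p) \<partial>N)"
    if Rfg: "R f g" for f g
  proof -
    have gm[measurable]: "g \<in> borel_measurable borel" using Rfg by (simp add: R_def)
    have "(\<integral>\<^sup>+t. ennreal (\<bar>g t\<bar> powr p) \<partial>L01) = (\<integral>\<^sup>+x. ennreal (w x) * ennreal (\<bar>g (\<phi> x)\<bar> powr p) \<partial>N)"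
      by (rule transfer) measurable
    also have "\<dots> = (\<integral>\<^sup>+x. ennreal (\<bar>f x\<bar> powr p) \<partial>N)"
    proof (rule nn_integral_cong_AE)
      show "AE x in N. ennreal (w x) * ennreal (\<bar>g (\<phi> x)\<bar> powr p) = ennreal (\<bar>f x\<bar> powr p)"
        using Rfg[unfolded R_def, THEN conjunct2] AE_space
      proof eventually_elim
        case (elim x)
        have w0: "0 < w x" using wpos elim by auto
        have "\<bar>f x\<bar> powr p = (\<bar>g (\<phi> x)\<bar> * W x) powr p" using elim Wpos[of x] by (simp add: abs_mult)
        also have "\<dots> = \<bar>g (\<phi> x)\<bar> powr p * w x"
          using w0 p by (simp add: powr_mult W_def powr_powr)
        finally show ?case using w0 by (simp add: ennreal_mult' mult.commute)
      qed
    qed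
    finally show ?thesis .
  qed
  have AEtr: "AE t in L01. Q t" if Qb: "{t. Q t} \<in> sets borel" and Q: "AE x in N. Q (\<phi> x)" for Q
  proof -
    have "(\<integral>\<^sup>+t. indicator {t. \<not> Q t} t \<partial>L01) = (\<integral>\<^sup>+x. ennreal (w x) * indicator {t. \<not> Q t} (\<phi> x) \<partial>N)"
    proof (rule transfer)
      have "{t. \<not> Q t} = - {t. Q t}" by auto
      then have "{t. \<not> Q t} \<in> sets borel" using Qb by (metis sets.compl_sets space_borel Compl_eq_Diff_UNIV)
      then show "indicator {t. \<not> Q t} \<in> borel_measurable borel" by simp
    qed
    also have "\<dots> = (\<integral>\<^sup>+x. 0 \<partial>N)"
      by (rule nn_integral_cong_AE) (use Q in \<open>eventually_elim, simp add: indicator_def\<close>)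
    finally have "integral\<^sup>N L01 (indicator {t. \<not> Q t}) = 0" by simp
    then show ?thesis by (subst AE_iff_nn_integral[OF L01_pred[OF Qb]])
  qed
  have Lp_meas: "f \<in> borel_measurable N" if "f \<in> Lp_fun N p" for f using that by (simp add: Lp_fun_def)
  have nn_fin: "(\<integral>\<^sup>+x. ennreal (\<bar>f x\<bar> powr p) \<partial>M) < \<infinity>" if "integrable M (\<lambda>x. \<bar>f x\<bar> powr p)" for M and f :: "'b \<Rightarrow> real"
    using that unfolding integrable_iff_bounded by simp
  have int_eq: "(\<integral>x. \<bar>f x\<bar> powr p \<partial>M) = enn2real (\<integral>\<^sup>+x. ennreal (\<bar>f x\<bar> powr p) \<partial>M)"
    if "f \<in> borel_measurable M" for M and f :: "'b \<Rightarrow> real"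
    using that by (intro integral_eq_nn_integral) auto
  have P1: "T f \<in> Lp_fun L01 p" if f: "f \<in> Lp_fun N p" for f
  proof -
    have R: "R f (T f)" using TR[OF Lp_meas[OF f]] .
    have m: "T f \<in> borel_measurable L01" using Rm[OF R] by (rule borel_L01)
    have "(\<integral>\<^sup>+t. ennreal (\<bar>T f t\<bar> powr p) \<partial>L01) < \<infinity>"
      using Rnorm[OF R] nn_fin[of N f] f by (simp add: Lp_fun_def)
    then have "integrable L01 (\<lambda>t. \<bar>T f t\<bar> powr p)" using m
      unfolding integrable_iff_bounded by auto
    then show ?thesis using m by (simp add: Lp_fun_def)
  qed
  have P3: "Lp_norm L01 p (T f) = Lp_norm N p f" if f: "f \<in> Lp_fun N p" for f
  proof -
    have R: "R f (T f)" using TR[OF Lp_meas[OF f]] .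
    have m: "T f \<in> borel_measurable L01" using Rm[OF R] by (rule borel_L01)
    show ?thesis unfolding Lp_norm_def int_eq[OF m] int_eq[OF Lp_meas[OF f]] Rnorm[OF R] ..
  qed
  have P2: "AE t in L01. T (\<lambda>x. a * f x + b * g x) t = a * T f t + b * T g t"
    if f: "f \<in> Lp_fun N p" and g: "g \<in> Lp_fun N p" for f g a b
  proof -
    have fm[measurable]: "f \<in> borel_measurable N" and gm[measurable]: "g \<in> borel_measurable N"
      using f g by (auto simp: Lp_fun_def)
    have Rk: "R (\<lambda>x. a * f x + b * g x) (T (\<lambda>x. a * f x + b * g x))" by (rule TR) measurable
    have Rf: "R f (T f)" and Rg: "R g (T g)" by (auto intro: TR)
    have [measurable]: "T (\<lambda>x. a * f x + b * g x) \<in> borel_measurable borel" "T f \<in> borel_measurable borel"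
      "T g \<in> borel_measurable borel" using Rk Rf Rg by (auto simp: R_def)
    show ?thesis
    proof (rule AEtr)
      show "{t. T (\<lambda>x. a * f x + b * g x) t = a * T f t + b * T g t} \<in> sets borel" by measurable
      show "AE x in N. T (\<lambda>x. a * f x + b * g x) (\<phi> x) = a * T f (\<phi> x) + b * T g (\<phi> x)"
        using Rk[unfolded R_def, THEN conjunct2] Rf[unfolded R_def, THEN conjunct2] Rg[unfolded R_def, THEN conjunct2] AE_space
      proof eventually_elim
        case (elim x)
        then have "T (\<lambda>x. a * f x + b * g x) (\<phi> x) * W x = (a * T f (\<phi> x) + b * T g (\<phi> x)) * W x"
          by (simp add: algebra_simps)
        then show ?case using Wpos[of x] elim by simp
      qed
    qed
  qed
  have P4: "\<exists>f\<in>Lp_fun N p. AE t in L01. T f t = G t" if G: "G \<in> Lp_fun L01 p" for G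
  proof -
    obtain g where gm[measurable]: "g \<in> borel_measurable borel" and Gg: "AE t in L01. G t = g t"
      using L01_borel_rep[of G] G by (auto simp: Lp_fun_def)
    define f where "f x = g (\<phi> x) * W x" for x
    have fm[measurable]: "f \<in> borel_measurable N" unfolding f_def by measurable
    have Rfg: "R f g" unfolding R_def f_def by auto
    have "(\<integral>\<^sup>+x. ennreal (\<bar>f x\<bar> powr p) \<partial>N) = (\<integral>\<^sup>+t. ennreal (\<bar>g t\<bar> powr p) \<partial>L01)"
      using Rnorm[OF Rfg] by simp
    also have "\<dots> = (\<integral>\<^sup>+t. ennreal (\<bar>G t\<bar> powr p) \<partial>L01)"
      by (rule nn_integral_cong_AE) (use Gg in \<open>eventually_elim, simp\<close>)
    also have "\<dots> < \<infinity>" using nn_fin[of L01 G] G by (simp add: Lp_fun_def)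
    finally have "integrable N (\<lambda>x. \<bar>f x\<bar> powr p)" unfolding integrable_iff_bounded by auto
    then have fL: "f \<in> Lp_fun N p" by (simp add: Lp_fun_def)
    have RT: "R f (T f)" by (rule TR) (rule fm)
    have [measurable]: "T f \<in> borel_measurable borel" using RT by (simp add: R_def)
    have "AE t in L01. T f t = g t"
    proof (rule AEtr)
      show "{t. T f t = g t} \<in> sets borel" by measurable
      show "AE x in N. T f (\<phi> x) = g (\<phi> x)"
        using RT[unfolded R_def, THEN conjunct2] AE_space
      proof eventually_elim
        case (elim x)
        then have "T f (\<phi> x) * W x = g (\<phi> x) * W x" by (metis f_def)
        then show ?case using Wpos[of x] elim by (metis less_irrefl mult_right_cancel)
      qed
    qed
    then have "AE t in L01. T f t = G t" using Gg by eventually_elim simp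
    then show ?thesis using fL by blast
  qed
  show ?thesis using P1 P2 P3 P4 by blast
qed




lemma infsum_ennreal_SUP: "infsum (f :: 'b \<Rightarrow> ennreal) A = (SUP F\<in>{F. finite F \<and> F \<subseteq> A}. sum f F)"
  by (rule nonneg_infsum_complete) simp

lemma infsum_ennreal_cmult: "infsum (\<lambda>x. c * (f x :: ennreal)) A = c * infsum f A"
  unfolding infsum_ennreal_SUP by (simp add: SUP_mult_left_ennreal sum_distrib_left)

lemma infsum_ennreal_add: "infsum (\<lambda>x. (f x :: ennreal) + g x) A = infsum f A + infsum g A"
  apply (rule infsum_add)
  apply (rule nonneg_summable_on_complete)
  apply simp
  apply (rule nonneg_summable_on_complete)
  apply simp
  done

lemma infsum_ennreal_SUP_swap:
  fixes g :: "nat \<Rightarrow> 'b \<Rightarrow> ennreal"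
  assumes inc: "\<And>j. incseq (\<lambda>i. g i j)"
  shows "(SUP i. infsum (g i) A) = infsum (\<lambda>j. SUP i. g i j) A"
proof -
  have "(SUP i. infsum (g i) A) = (SUP i. SUP F\<in>{F. finite F \<and> F \<subseteq> A}. sum (g i) F)"
    by (simp add: infsum_ennreal_SUP)
  also have "\<dots> = (SUP F\<in>{F. finite F \<and> F \<subseteq> A}. SUP i. sum (g i) F)"
    by (rule SUP_commute)
  also have "\<dots> = (SUP F\<in>{F. finite F \<and> F \<subseteq> A}. sum (\<lambda>j. SUP i. g i j) F)"
    by (intro SUP_cong refl ennreal_SUP_sum) (use inc in auto)
  also have "\<dots> = infsum (\<lambda>j. SUP i. g i j) A" by (simp add: infsum_ennreal_SUP)
  finally show ?thesis .
qed

lemma partition_nn_integral: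
  fixes v :: "'a \<Rightarrow> ennreal"
  assumes part: "\<forall>E\<in>sets M. emeasure M E < \<infinity> \<longrightarrow> emeasure M E = (\<Sum>\<^sub>\<infinity>i\<in>J. emeasure M (E \<inter> Xs i))"
    and XsM: "\<And>i. i \<in> J \<Longrightarrow> Xs i \<in> sets M"
    and v: "v \<in> borel_measurable M" and fin: "(\<integral>\<^sup>+x. v x \<partial>M) < \<infinity>"
  shows "(\<integral>\<^sup>+x. v x \<partial>M) = (\<Sum>\<^sub>\<infinity>i\<in>J. \<integral>\<^sup>+x. v x * indicator (Xs i) x \<partial>M)"
  using v fin
proof (induction rule: borel_measurable_induct)
  case (cong f g)
  have "(\<integral>\<^sup>+x. f x \<partial>M) = (\<integral>\<^sup>+x. g x \<partial>M)" using cong(3) by (intro nn_integral_cong) auto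
  moreover have "(\<integral>\<^sup>+x. f x * indicator (Xs i) x \<partial>M) = (\<integral>\<^sup>+x. g x * indicator (Xs i) x \<partial>M)" for i
    using cong(3) by (intro nn_integral_cong) auto
  ultimately show ?case using cong(4) cong(5) by simp
next
  case (set A)
  have "emeasure M A < \<infinity>" using set by simp
  then have "emeasure M A = (\<Sum>\<^sub>\<infinity>i\<in>J. emeasure M (A \<inter> Xs i))" using part set(1) by blast
  also have "\<dots> = (\<Sum>\<^sub>\<infinity>i\<in>J. \<integral>\<^sup>+x. indicator A x * indicator (Xs i) x \<partial>M)"
  proof (rule infsum_cong)
    fix i assume i: "i \<in> J"
    have "(\<integral>\<^sup>+x. indicator A x * indicator (Xs i) x \<partial>M) = (\<integral>\<^sup>+x. indicator (A \<inter> Xs i) x \<partial>M)"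
      by (intro nn_integral_cong) (auto simp: indicator_def)
    also have "\<dots> = emeasure M (A \<inter> Xs i)" using set(1) XsM[OF i] by simp
    finally show "emeasure M (A \<inter> Xs i) = (\<integral>\<^sup>+x. indicator A x * indicator (Xs i) x \<partial>M)" by simp
  qed
  finally show ?case using set(1) by simp
next
  case (mult u c)
  show ?case
  proof (cases "c = 0")
    case True then show ?thesis by simp
  next
    case False
    have eq: "(\<integral>\<^sup>+x. c * u x \<partial>M) = c * (\<integral>\<^sup>+x. u x \<partial>M)" by (rule nn_integral_cmult) (rule mult(2))
    then have "c * (\<integral>\<^sup>+x. u x \<partial>M) < top" using mult(5) by simp
    then have "(\<integral>\<^sup>+x. u x \<partial>M) < \<infinity>" using False
      by (cases "(\<integral>\<^sup>+x. u x \<partial>M) = 0") (auto simp: ennreal_mult_less_top)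
    then have IH: "(\<integral>\<^sup>+x. u x \<partial>M) = (\<Sum>\<^sub>\<infinity>i\<in>J. \<integral>\<^sup>+x. u x * indicator (Xs i) x \<partial>M)" using mult(4) by simp
    have "(\<integral>\<^sup>+x. c * u x * indicator (Xs i) x \<partial>M) = c * (\<integral>\<^sup>+x. u x * indicator (Xs i) x \<partial>M)" if "i \<in> J" for i
    proof -
      have "(\<integral>\<^sup>+x. c * u x * indicator (Xs i) x \<partial>M) = (\<integral>\<^sup>+x. c * (u x * indicator (Xs i) x) \<partial>M)"
        by (simp only: mult.assoc)
      also have "\<dots> = c * (\<integral>\<^sup>+x. u x * indicator (Xs i) x \<partial>M)"
        by (rule nn_integral_cmult) (use mult(2) XsM[OF that] in measurable)
      finally show ?thesis .
    qed
    then have "(\<Sum>\<^sub>\<infinity>i\<in>J. \<integral>\<^sup>+x. c * u x * indicator (Xs i) x \<partial>M) = (\<Sum>\<^sub>\<infinity>i\<in>J. c * (\<integral>\<^sup>+x. u x * indicator (Xs i) x \<partial>M))"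
      by (rule infsum_cong)
    also have "\<dots> = c * (\<Sum>\<^sub>\<infinity>i\<in>J. \<integral>\<^sup>+x. u x * indicator (Xs i) x \<partial>M)" by (rule infsum_ennreal_cmult)
    finally show ?thesis using eq IH by simp
  qed
next
  case (add u v)
  have eq: "(\<integral>\<^sup>+x. v x + u x \<partial>M) = (\<integral>\<^sup>+x. v x \<partial>M) + (\<integral>\<^sup>+x. u x \<partial>M)" using add by (simp add: nn_integral_add)
  then have fu: "(\<integral>\<^sup>+x. u x \<partial>M) < \<infinity>" and fv: "(\<integral>\<^sup>+x. v x \<partial>M) < \<infinity>" using add(8) by auto
  have "(\<integral>\<^sup>+x. (v x + u x) * indicator (Xs i) x \<partial>M) = (\<integral>\<^sup>+x. v x * indicator (Xs i) x \<partial>M) + (\<integral>\<^sup>+x. u x * indicator (Xs i) x \<partial>M)" if "i \<in> J" for i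
  proof -
    have [measurable]: "u \<in> borel_measurable M" "v \<in> borel_measurable M" "Xs i \<in> sets M"
      using add XsM[OF that] by auto
    have "(\<integral>\<^sup>+x. (v x + u x) * indicator (Xs i) x \<partial>M) = (\<integral>\<^sup>+x. v x * indicator (Xs i) x + u x * indicator (Xs i) x \<partial>M)"
      by (simp add: distrib_right)
    also have "\<dots> = (\<integral>\<^sup>+x. v x * indicator (Xs i) x \<partial>M) + (\<integral>\<^sup>+x. u x * indicator (Xs i) x \<partial>M)"
      by (rule nn_integral_add) measurable
    finally show ?thesis .
  qed
  then have "(\<Sum>\<^sub>\<infinity>i\<in>J. \<integral>\<^sup>+x. (v x + u x) * indicator (Xs i) x \<partial>M) = (\<Sum>\<^sub>\<infinity>i\<in>J. (\<integral>\<^sup>+x. v x * indicator (Xs i) x \<partial>M) + (\<integral>\<^sup>+x. u x * indicator (Xs i) x \<partial>M))"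
    by (rule infsum_cong)
  also have "\<dots> = (\<Sum>\<^sub>\<infinity>i\<in>J. \<integral>\<^sup>+x. v x * indicator (Xs i) x \<partial>M) + (\<Sum>\<^sub>\<infinity>i\<in>J. \<integral>\<^sup>+x. u x * indicator (Xs i) x \<partial>M)"
    by (rule infsum_ennreal_add)
  finally have S: "(\<Sum>\<^sub>\<infinity>i\<in>J. \<integral>\<^sup>+x. (v x + u x) * indicator (Xs i) x \<partial>M) = (\<Sum>\<^sub>\<infinity>i\<in>J. \<integral>\<^sup>+x. v x * indicator (Xs i) x \<partial>M) + (\<Sum>\<^sub>\<infinity>i\<in>J. \<integral>\<^sup>+x. u x * indicator (Xs i) x \<partial>M)" .
  have IHu: "(\<integral>\<^sup>+x. u x \<partial>M) = (\<Sum>\<^sub>\<infinity>i\<in>J. \<integral>\<^sup>+x. u x * indicator (Xs i) x \<partial>M)"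
    using add fu by blast
  have IHv: "(\<integral>\<^sup>+x. v x \<partial>M) = (\<Sum>\<^sub>\<infinity>i\<in>J. \<integral>\<^sup>+x. v x * indicator (Xs i) x \<partial>M)"
    using add fv by blast
  show ?case using eq S IHu IHv by simp
next
  case (seq U)
  have mono_int: "(\<integral>\<^sup>+x. U i x \<partial>M) \<le> (\<integral>\<^sup>+x. (SUP i. U i) x \<partial>M)" for i
    by (intro nn_integral_mono) (auto intro: SUP_upper)
  have IH: "(\<integral>\<^sup>+x. U i x \<partial>M) = (\<Sum>\<^sub>\<infinity>j\<in>J. \<integral>\<^sup>+x. U i x * indicator (Xs j) x \<partial>M)" for i
  proof -
    have "(\<integral>\<^sup>+x. U i x \<partial>M) < \<infinity>" using mono_int[of i] seq.prems by (rule le_less_trans)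
    then show ?thesis using seq by blast
  qed
  have "(\<integral>\<^sup>+x. (SUP i. U i) x \<partial>M) = (\<integral>\<^sup>+x. (SUP i. U i x) \<partial>M)" by (simp add: image_comp)
  also have "\<dots> = (SUP i. \<integral>\<^sup>+x. U i x \<partial>M)"
    using seq by (intro nn_integral_monotone_convergence_SUP) (auto simp: incseq_def le_fun_def)
  also have "\<dots> = (SUP i. \<Sum>\<^sub>\<infinity>j\<in>J. \<integral>\<^sup>+x. U i x * indicator (Xs j) x \<partial>M)" using IH by simp
  also have "\<dots> = (\<Sum>\<^sub>\<infinity>j\<in>J. SUP i. \<integral>\<^sup>+x. U i x * indicator (Xs j) x \<partial>M)"
  proof (rule infsum_ennreal_SUP_swap)
    fix j show "incseq (\<lambda>i. \<integral>\<^sup>+x. U i x * indicator (Xs j) x \<partial>M)"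
      using seq by (auto simp: incseq_def le_fun_def intro!: nn_integral_mono mult_right_mono)
  qed
  also have "\<dots> = (\<Sum>\<^sub>\<infinity>j\<in>J. \<integral>\<^sup>+x. (SUP i. U i) x * indicator (Xs j) x \<partial>M)"
  proof (rule infsum_cong)
    fix j assume j: "j \<in> J"
    have "(\<integral>\<^sup>+x. (SUP i. U i x * indicator (Xs j) x) \<partial>M) = (SUP i. \<integral>\<^sup>+x. U i x * indicator (Xs j) x \<partial>M)"
      using seq XsM[OF j] by (intro nn_integral_monotone_convergence_SUP) (auto simp: incseq_def le_fun_def intro!: mult_right_mono)
    moreover have "(SUP i. U i x * indicator (Xs j) x) = (SUP i. U i) x * indicator (Xs j) x" for x
      by (simp add: image_comp SUP_mult_right_ennreal)
    ultimately show "(SUP i. \<integral>\<^sup>+x. U i x * indicator (Xs j) x \<partial>M) = (\<integral>\<^sup>+x. (SUP i. U i) x * indicator (Xs j) x \<partial>M)"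
      by simp
  qed
  finally show ?case by simp
qed


lemma partition_has_sum:
  fixes u :: "'a \<Rightarrow> real"
  assumes part: "\<forall>E\<in>sets M. emeasure M E < \<infinity> \<longrightarrow> emeasure M E = (\<Sum>\<^sub>\<infinity>i\<in>J. emeasure M (E \<inter> Xs i))"
    and XsM: "\<And>i. i \<in> J \<Longrightarrow> Xs i \<in> sets M"
    and um[measurable]: "u \<in> borel_measurable M" and u0: "\<And>x. 0 \<le> u x" and ui: "integrable M u"
  shows "((\<lambda>i. \<integral>x. u x \<partial>(restrict_space M (Xs i))) has_sum (\<integral>x. u x \<partial>M)) J"
proof -
  define S where "S = (\<integral>\<^sup>+x. ennreal (u x) \<partial>M)"
  define b where "b i = (\<integral>\<^sup>+x. ennreal (u x) * indicator (Xs i) x \<partial>M)" for i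
  define a where "a i = (\<integral>x. u x \<partial>(restrict_space M (Xs i)))" for i
  have Sfin: "S < \<infinity>" using ui unfolding S_def integrable_iff_bounded using u0 by simp
  have Sb: "S = (\<Sum>\<^sub>\<infinity>i\<in>J. b i)" unfolding S_def b_def
    by (rule partition_nn_integral[OF part XsM]) (use Sfin in \<open>auto simp: S_def\<close>)
  have bS: "b i \<le> S" for i unfolding b_def S_def
    by (intro nn_integral_mono) (auto simp: indicator_def)
  have ab: "ennreal (a i) = b i" if i: "i \<in> J" for i
  proof -
    have Xi: "Xs i \<inter> space M \<in> sets M" using XsM[OF i] by auto
    have "a i = enn2real (\<integral>\<^sup>+x. ennreal (u x) \<partial>(restrict_space M (Xs i)))"
      unfolding a_def by (rule integral_eq_nn_integral) (auto intro: measurable_restrict_space1 simp: u0)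
    also have "(\<integral>\<^sup>+x. ennreal (u x) \<partial>(restrict_space M (Xs i))) = b i"
      unfolding b_def using Xi by (rule nn_integral_restrict_space)
    finally have "a i = enn2real (b i)" .
    moreover have "b i < \<infinity>" using bS[of i] Sfin by (rule le_less_trans)
    ultimately show ?thesis by (simp add: less_top)
  qed
  have a0: "0 \<le> a i" for i unfolding a_def by (simp add: u0)
  have sumF: "ennreal (sum a F) = sum b F" if "finite F" "F \<subseteq> J" for F
  proof -
    have "ennreal (sum a F) = (\<Sum>i\<in>F. ennreal (a i))" using a0 by (simp add: sum_ennreal)
    also have "\<dots> = sum b F" using that ab by (intro sum.cong) auto
    finally show ?thesis .
  qed
  have sumle: "sum b F \<le> S" if "finite F" "F \<subseteq> J" for F
    unfolding Sb infsum_ennreal_SUP using that by (intro SUP_upper) auto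
  have summ: "a summable_on J"
  proof (rule nonneg_bdd_above_summable_on)
    show "bdd_above (sum a ` {F. F \<subseteq> J \<and> finite F})"
    proof (rule bdd_aboveI)
      fix r assume "r \<in> sum a ` {F. F \<subseteq> J \<and> finite F}"
      then obtain F where F: "F \<subseteq> J" "finite F" "r = sum a F" by auto
      then have "ennreal r \<le> S" using sumF sumle by simp
      then show "r \<le> enn2real S" using Sfin
        by (metis enn2real_mono enn2real_ennreal a0 F(3) sum_nonneg infinity_ennreal_def)
    qed
  qed (rule a0)
  have "ennreal (infsum a J) = (SUP F\<in>{F. finite F \<and> F \<subseteq> J}. ennreal (sum a F))"
    by (rule infsum_nonneg_is_SUPREMUM_ennreal[OF summ a0])
  also have "\<dots> = (SUP F\<in>{F. finite F \<and> F \<subseteq> J}. sum b F)"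
    by (intro SUP_cong refl) (auto simp: sumF)
  also have "\<dots> = S" unfolding Sb infsum_ennreal_SUP ..
  finally have "infsum a J = enn2real S" by (metis enn2real_ennreal infsum_nonneg a0)
  also have "enn2real S = (\<integral>x. u x \<partial>M)" unfolding S_def
    by (rule integral_eq_nn_integral[symmetric]) (auto simp: u0)
  finally have "infsum a J = (\<integral>x. u x \<partial>M)" .
  then show ?thesis using summ unfolding a_def by (metis has_sum_infsum)
qed




lemma sigma_finite_restrict:
  assumes Y: "sigma_finite_set M Y"
  shows "sigma_finite_measure (restrict_space M Y)"
proof
  have YM: "Y \<in> sets M" and "\<exists>A :: nat \<Rightarrow> 'a set. range A \<subseteq> sets M \<and> \<Union>(range A) = Y \<and> (\<forall>n. emeasure M (A n) < \<infinity>)"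
    using Y unfolding sigma_finite_set_def by auto
  then obtain A :: "nat \<Rightarrow> 'a set" where A: "range A \<subseteq> sets M" "\<Union>(range A) = Y" "\<And>n. emeasure M (A n) < \<infinity>"
    by blast
  have sp: "space (restrict_space M Y) = Y" using sets.sets_into_space[OF YM] by (simp add: space_restrict_space Int_absorb2)
  show "\<exists>B. countable B \<and> B \<subseteq> sets (restrict_space M Y) \<and> \<Union>B = space (restrict_space M Y) \<and>
      (\<forall>a\<in>B. emeasure (restrict_space M Y) a \<noteq> \<infinity>)"
  proof (intro exI[of _ "range A"] conjI ballI)
    show "countable (range A)" by simp
    have "A n \<subseteq> Y" for n using A(2) by blast
    then show "range A \<subseteq> sets (restrict_space M Y)" using A(1) YM by (auto simp: sets_restrict_space_iff)
    show "\<Union>(range A) = space (restrict_space M Y)" using A(2) sp by simp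
    fix a assume "a \<in> range A"
    then obtain n where "a = A n" by auto
    moreover have "A n \<subseteq> Y" using A(2) by blast
    ultimately show "emeasure (restrict_space M Y) a \<noteq> \<infinity>"
      using A(3)[of n] YM by (subst emeasure_restrict_space) auto
  qed
qed

lemma Lp_fun_restrict:
  assumes "f \<in> Lp_fun M p" "Y \<in> sets M"
  shows "f \<in> Lp_fun (restrict_space M Y) p"
proof -
  have "f \<in> borel_measurable (restrict_space M Y)" using assms by (auto simp: Lp_fun_def intro: measurable_restrict_space1)
  moreover have "integrable M (\<lambda>x. indicator Y x *\<^sub>R \<bar>f x\<bar> powr p)"
    using assms by (intro integrable_mult_indicator) (auto simp: Lp_fun_def)
  then have "integrable (restrict_space M Y) (\<lambda>x. \<bar>f x\<bar> powr p)"
    using assms by (subst integrable_restrict_space) auto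
  ultimately show ?thesis by (simp add: Lp_fun_def)
qed

lemma powr_Lp_norm: "Lp_norm M p f powr p = (\<integral>x. \<bar>f x\<bar> powr p \<partial>M)" if "p \<noteq> 0"
  unfolding Lp_norm_def using that by (simp add: powr_powr integral_nonneg_AE)




lemma glue:
  fixes M :: "'a measure" and J :: "'i set" and Xs :: "'i \<Rightarrow> 'a set" and p :: real
    and ff :: "'i \<Rightarrow> 'a \<Rightarrow> real" and aG :: "'i \<Rightarrow> real"
  assumes p: "1 \<le> p"
   and XsM: "\<And>i. i \<in> J \<Longrightarrow> Xs i \<in> sets M"
   and disj: "\<And>i j. i \<in> J \<Longrightarrow> j \<in> J \<Longrightarrow> i \<noteq> j \<Longrightarrow> emeasure M (Xs i \<inter> Xs j) = 0"
   and J1: "J1 \<subseteq> J" "countable J1"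
   and ffL: "\<And>j. j \<in> J1 \<Longrightarrow> ff j \<in> Lp_fun (restrict_space M (Xs j)) p"
   and ffn: "\<And>j. j \<in> J1 \<Longrightarrow> (\<integral>x. \<bar>ff j x\<bar> powr p \<partial>restrict_space M (Xs j)) = aG j"
   and aGs: "aG summable_on J" and aG0: "\<And>j. j \<in> J \<Longrightarrow> 0 \<le> aG j"
  shows "\<exists>f\<in>Lp_fun M p. (\<forall>j\<in>J1. AE x in restrict_space M (Xs j). f x = ff j x) \<and>
            (\<forall>j\<in>J-J1. AE x in restrict_space M (Xs j). f x = 0)"
proof -
  define enc where "enc = to_nat_on J1"
  define dec where "dec = from_nat_into J1"
  have dec_enc[simp]: "dec (enc j) = j" if "j \<in> J1" for j
    unfolding dec_def enc_def using J1(2) that by simp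
  have enc_inj: "enc j = enc k \<longleftrightarrow> j = k" if "j \<in> J1" "k \<in> J1" for j k
    using that dec_enc by metis
  define X' where "X' j = Xs j - (\<Union>k\<in>{k\<in>J1. enc k < enc j}. Xs k)" for j
  have X'M[measurable]: "X' j \<in> sets M" if "j \<in> J1" for j
    unfolding X'_def using that J1 XsM
    by (intro sets.Diff sets.countable_UN') (auto intro: countable_subset[OF _ J1(2)])
  have X'sub: "X' j \<subseteq> Xs j" for j by (auto simp: X'_def)
  have X'disj: "j = k" if "j \<in> J1" "k \<in> J1" "x \<in> X' j" "x \<in> X' k" for j k x
  proof (rule ccontr)
    assume "j \<noteq> k"
    then have "enc j < enc k \<or> enc k < enc j" using enc_inj[OF that(1,2)] by arith
    then show False using that by (auto simp: X'_def)
  qed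
  define ext where "ext j x = indicator (Xs j) x * ff j x" for j x
  have extm[measurable]: "ext j \<in> borel_measurable M" if "j \<in> J1" for j
  proof -
    have "ff j \<in> borel_measurable (restrict_space M (Xs j))" using ffL[OF that] by (simp add: Lp_fun_def)
    then show ?thesis unfolding ext_def using XsM J1 that
      by (subst (asm) borel_measurable_restrict_space_iff) auto
  qed
  define P where "P n x = (if n \<in> enc ` J1 then indicator (X' (dec n)) x * ext (dec n) x else 0)" for n x
  have Pm[measurable]: "P n \<in> borel_measurable M" for n
    unfolding P_def by (cases "n \<in> enc ` J1") auto
  have P_in: "P n x = (if n = enc j then ff j x else 0)" if "j \<in> J1" "x \<in> X' j" for j n x
  proof (cases "n \<in> enc ` J1")
    case True
    then obtain k where k: "k \<in> J1" "n = enc k" by auto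
    show ?thesis
    proof (cases "k = j")
      case True
      have "x \<in> Xs j" using that(2) X'sub by blast
      then show ?thesis using that k True by (auto simp: P_def ext_def)
    next
      case False
      then have "x \<notin> X' k" using X'disj[OF k(1) that(1) _ that(2)] by auto
      then show ?thesis using k that False enc_inj by (auto simp: P_def)
    qed
  next
    case False then show ?thesis using that by (auto simp: P_def)
  qed
  have P_out: "P n x = 0" if "\<forall>j\<in>J1. x \<notin> X' j" for n x
    using that by (auto simp: P_def)
  define f where "f x = (\<Sum>n. P n x)" for x
  have f_in: "f x = ff j x" if "j \<in> J1" "x \<in> X' j" for j x
  proof -
    have "(\<lambda>n. P n x) = (\<lambda>n. if n = enc j then ff j x else 0)" using P_in[OF that] by auto
    then show ?thesis unfolding f_def using sums_single[of "enc j" "\<lambda>_. ff j x"] by (simp add: sums_iff)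
  qed
  have f_out: "f x = 0" if "\<forall>j\<in>J1. x \<notin> X' j" for x
    unfolding f_def using P_out[OF that] by simp
  have fm[measurable]: "f \<in> borel_measurable M" unfolding f_def by measurable
  have fpow: "ennreal (\<bar>f x\<bar> powr p) = (\<Sum>n. ennreal (\<bar>P n x\<bar> powr p))" for x
  proof (cases "\<exists>j\<in>J1. x \<in> X' j")
    case True
    then obtain j where j: "j \<in> J1" "x \<in> X' j" by blast
    have "(\<lambda>n. ennreal (\<bar>P n x\<bar> powr p)) = (\<lambda>n. if n = enc j then ennreal (\<bar>ff j x\<bar> powr p) else 0)"
      using P_in[OF j] by auto
    then show ?thesis using f_in[OF j] sums_single[of "enc j" "\<lambda>_. ennreal (\<bar>ff j x\<bar> powr p)"]
      by (simp add: sums_iff)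
  next
    case False then show ?thesis using f_out P_out by simp
  qed
  define c where "c n = (if n \<in> enc ` J1 then ennreal (aG (dec n)) else 0)" for n
  have Pint: "(\<integral>\<^sup>+x. ennreal (\<bar>P n x\<bar> powr p) \<partial>M) \<le> c n" for n
  proof (cases "n \<in> enc ` J1")
    case False then show ?thesis by (simp add: P_def c_def)
  next
    case True
    then obtain j where j: "j \<in> J1" "n = enc j" by auto
    have jJ: "j \<in> J" using j J1 by auto
    have "(\<integral>\<^sup>+x. ennreal (\<bar>P n x\<bar> powr p) \<partial>M) \<le> (\<integral>\<^sup>+x. ennreal (\<bar>ff j x\<bar> powr p) * indicator (Xs j) x \<partial>M)"
      using j X'sub by (intro nn_integral_mono) (auto simp: P_def ext_def indicator_def)
    also have "\<dots> = (\<integral>\<^sup>+x. ennreal (\<bar>ff j x\<bar> powr p) \<partial>restrict_space M (Xs j))"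
      using XsM[OF jJ] by (subst nn_integral_restrict_space) auto
    also have "\<dots> = ennreal (\<integral>x. \<bar>ff j x\<bar> powr p \<partial>restrict_space M (Xs j))"
      using ffL[OF j(1)] by (intro nn_integral_eq_integral) (auto simp: Lp_fun_def)
    also have "\<dots> = c n" using ffn[OF j(1)] j by (simp add: c_def)
    finally show ?thesis .
  qed
  have csum: "(\<Sum>n. c n) \<le> ennreal (infsum aG J)"
  proof (rule suminf_le_const)
    show "summable c" by (rule summableI)
    fix N
    define F where "F = {j\<in>J1. enc j < N}"
    have Fsub: "F \<subseteq> dec ` {..<N}"
    proof
      fix j assume "j \<in> F"
      then have "j \<in> J1" "enc j < N" by (auto simp: F_def)
      then show "j \<in> dec ` {..<N}" by (metis dec_enc image_eqI lessThan_iff)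
    qed
    then have finF: "finite F" by (rule finite_subset) simp
    have "sum c {..<N} = (\<Sum>n\<in>{..<N} \<inter> enc ` J1. ennreal (aG (dec n)))"
      unfolding c_def by (simp add: sum.If_cases Int_commute)
    also have "{..<N} \<inter> enc ` J1 = enc ` F" by (auto simp: F_def)
    also have "(\<Sum>n\<in>enc ` F. ennreal (aG (dec n))) = (\<Sum>j\<in>F. ennreal (aG j))"
      by (subst sum.reindex) (auto simp: F_def inj_on_def enc_inj)
    also have "\<dots> = ennreal (sum aG F)" using aG0 J1 by (intro sum_ennreal) (auto simp: F_def)
    also have "sum aG F \<le> infsum aG J"
    proof -
      have "infsum aG F \<le> infsum aG J"
        using aGs finF J1 aG0 by (intro infsum_mono_neutral) (auto simp: F_def)
      then show ?thesis using finF by simp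
    qed
    finally show "sum c {..<N} \<le> ennreal (infsum aG J)" by (simp add: ennreal_leI)
  qed
  have "(\<integral>\<^sup>+x. ennreal (\<bar>f x\<bar> powr p) \<partial>M) = (\<Sum>n. \<integral>\<^sup>+x. ennreal (\<bar>P n x\<bar> powr p) \<partial>M)"
    unfolding fpow by (rule nn_integral_suminf) measurable
  also have "\<dots> \<le> (\<Sum>n. c n)" by (intro suminf_le) (auto intro: Pint)
  also have "\<dots> < \<infinity>" using csum by (simp add: le_less_trans)
  finally have "integrable M (\<lambda>x. \<bar>f x\<bar> powr p)" unfolding integrable_iff_bounded by simp
  then have fL: "f \<in> Lp_fun M p" using fm by (simp add: Lp_fun_def)
  have AEnot: "AE x in M. x \<in> Xs j \<longrightarrow> (\<forall>k\<in>J1 - {j}. x \<notin> Xs k)" if j: "j \<in> J" for j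
  proof -
    have "AE x in M. \<forall>k\<in>J1 - {j}. x \<notin> Xs j \<inter> Xs k"
    proof (subst AE_ball_countable)
      show "countable (J1 - {j})" using J1(2) by auto
      show "\<forall>k\<in>J1 - {j}. AE x in M. x \<notin> Xs j \<inter> Xs k"
      proof
        fix k assume k: "k \<in> J1 - {j}"
        then have "Xs j \<inter> Xs k \<in> null_sets M" using disj[OF j, of k] XsM[OF j] XsM[of k] J1 by auto
        then show "AE x in M. x \<notin> Xs j \<inter> Xs k" by (rule AE_not_in)
      qed
    qed
    then show ?thesis by eventually_elim auto
  qed
  have A1: "AE x in restrict_space M (Xs j). f x = ff j x" if j: "j \<in> J1" for j
  proof -
    have jJ: "j \<in> J" using j J1 by auto
    have "AE x in M. x \<in> Xs j \<longrightarrow> f x = ff j x" using AEnot[OF jJ]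
    proof eventually_elim
      case (elim x)
      show ?case
      proof
        assume x: "x \<in> Xs j"
        then have "x \<in> X' j" using elim by (auto simp: X'_def)
        then show "f x = ff j x" by (rule f_in[OF j])
      qed
    qed
    then show ?thesis using XsM[OF jJ] by (subst AE_restrict_space_iff) auto
  qed
  have A2: "AE x in restrict_space M (Xs j). f x = 0" if j: "j \<in> J - J1" for j
  proof -
    have jJ: "j \<in> J" using j by auto
    have "AE x in M. x \<in> Xs j \<longrightarrow> f x = 0" using AEnot[OF jJ]
    proof eventually_elim
      case (elim x)
      show ?case
      proof
        assume x: "x \<in> Xs j"
        then have "\<forall>k\<in>J1. x \<notin> X' k" using elim j X'sub by fastforce
        then show "f x = 0" by (rule f_out)
      qed
    qed
    then show ?thesis using XsM[OF jJ] by (subst AE_restrict_space_iff) auto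
  qed
  show ?thesis using fL A1 A2 by blast
qed

theorem main:
  fixes M :: "'a measure" and J :: "'i set" and Xs :: "'i \<Rightarrow> 'a set" and p :: real
  assumes p: "1 \<le> p"
    and rna: "relatively_nonatomic M"
    and sp: "separable_partition M J Xs"
  shows "\<exists>T. isometric_iso_Lp_lp M J p T"
proof -
  have XsM: "\<And>i. i \<in> J \<Longrightarrow> Xs i \<in> sets M" and sfs: "\<And>i. i \<in> J \<Longrightarrow> sigma_finite_set M (Xs i)"
    and sep: "\<And>i. i \<in> J \<Longrightarrow> separable_set M (Xs i)" and Xpos: "\<And>i. i \<in> J \<Longrightarrow> emeasure M (Xs i) > 0"
    and disj: "\<And>i j. i \<in> J \<Longrightarrow> j \<in> J \<Longrightarrow> i \<noteq> j \<Longrightarrow> emeasure M (Xs i \<inter> Xs j) = 0"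
    and part: "\<forall>E\<in>sets M. emeasure M E < \<infinity> \<longrightarrow> emeasure M E = (\<Sum>\<^sub>\<infinity>i\<in>J. emeasure M (E \<inter> Xs i))"
    using sp unfolding separable_partition_def by blast+
  define R where "R i = restrict_space M (Xs i)" for i
  have spR: "space (R i) = Xs i" if "i \<in> J" for i
    using XsM[OF that] sets.sets_into_space by (auto simp: R_def space_restrict_space)
  define Pr where "Pr i T \<longleftrightarrow> (\<forall>f\<in>Lp_fun (R i) p. T f \<in> Lp_fun L01 p) \<and>
    (\<forall>f\<in>Lp_fun (R i) p. \<forall>g\<in>Lp_fun (R i) p. \<forall>a b::real. AE t in L01. T (\<lambda>x. a * f x + b * g x) t = a * T f t + b * T g t) \<and>
    (\<forall>f\<in>Lp_fun (R i) p. Lp_norm L01 p (T f) = Lp_norm (R i) p f) \<and>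
    (\<forall>G\<in>Lp_fun L01 p. \<exists>f\<in>Lp_fun (R i) p. AE t in L01. T f t = G t)" for i and T :: "('a \<Rightarrow> real) \<Rightarrow> real \<Rightarrow> real"
  have "\<exists>T. Pr i T" if i: "i \<in> J" for i
    unfolding Pr_def
  proof (rule piece_iso[OF p])
    show "sigma_finite_measure (R i)" unfolding R_def by (rule sigma_finite_restrict[OF sfs[OF i]])
    show "purely_nonatomic (R i)" using rna sfs[OF i] XsM[OF i] unfolding R_def relatively_nonatomic_def by blast
    show "Lp_separable (R i) p" using sep[OF i] p unfolding R_def separable_set_def by blast
    show "emeasure (R i) (space (R i)) > 0" using Xpos[OF i] XsM[OF i] spR[OF i]
      by (simp add: R_def emeasure_restrict_space)
  qed
  then have "\<forall>i\<in>J. \<exists>T. Pr i T" by blast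
  from bchoice[OF this] obtain TT where TT: "\<And>i. i \<in> J \<Longrightarrow> Pr i (TT i)" by blast
  have TT1: "\<And>i f. i \<in> J \<Longrightarrow> f \<in> Lp_fun (R i) p \<Longrightarrow> TT i f \<in> Lp_fun L01 p"
    using TT unfolding Pr_def by blast
  have TT2: "\<And>i f g a b. i \<in> J \<Longrightarrow> f \<in> Lp_fun (R i) p \<Longrightarrow> g \<in> Lp_fun (R i) p \<Longrightarrow>
       AE t in L01. TT i (\<lambda>x. a * f x + b * g x) t = a * TT i f t + b * TT i g t"
    using TT unfolding Pr_def by blast
  have TT3: "\<And>i f. i \<in> J \<Longrightarrow> f \<in> Lp_fun (R i) p \<Longrightarrow> Lp_norm L01 p (TT i f) = Lp_norm (R i) p f"
    using TT unfolding Pr_def by blast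
  have TT4: "\<And>i G. i \<in> J \<Longrightarrow> G \<in> Lp_fun L01 p \<Longrightarrow> \<exists>f\<in>Lp_fun (R i) p. AE t in L01. TT i f t = G t"
    using TT unfolding Pr_def by blast
  define T where "T f = (\<lambda>i. TT i f)" for f :: "'a \<Rightarrow> real"
  have LR: "f \<in> Lp_fun (R i) p" if "f \<in> Lp_fun M p" "i \<in> J" for f i
    unfolding R_def using that XsM by (intro Lp_fun_restrict) auto
  have hs: "((\<lambda>i. Lp_norm L01 p (T f i) powr p) has_sum (\<integral>x. \<bar>f x\<bar> powr p \<partial>M)) J"
    if f: "f \<in> Lp_fun M p" for f
  proof -
    have "((\<lambda>i. \<integral>x. \<bar>f x\<bar> powr p \<partial>(R i)) has_sum (\<integral>x. \<bar>f x\<bar> powr p \<partial>M)) J"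
      unfolding R_def using f by (intro partition_has_sum[OF part XsM]) (auto simp: Lp_fun_def)
    moreover have "Lp_norm L01 p (T f i) powr p = (\<integral>x. \<bar>f x\<bar> powr p \<partial>(R i))" if "i \<in> J" for i
      using TT3[OF that LR[OF f that]] p by (simp add: T_def powr_Lp_norm)
    ultimately show ?thesis by (metis (no_types, lifting) has_sum_cong)
  qed
  have I1: "\<forall>f\<in>Lp_fun M p. T f \<in> lp_Lp01 J p"
  proof
    fix f assume f: "f \<in> Lp_fun M p"
    have "(\<lambda>i. Lp_norm L01 p (T f i) powr p) summable_on J" using hs[OF f] unfolding summable_on_def by blast
    then show "T f \<in> lp_Lp01 J p" using TT1 LR f unfolding lp_Lp01_def T_def by auto
  qed
  have I2: "\<forall>f\<in>Lp_fun M p. \<forall>g\<in>Lp_fun M p. \<forall>a b::real.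
        lp_eq J (T (\<lambda>x. a * f x + b * g x)) (\<lambda>j t. a * T f j t + b * T g j t)"
    unfolding lp_eq_def T_def using TT2 LR by blast
  have I3: "\<forall>f\<in>Lp_fun M p. lp_Lp01_norm J p (T f) = Lp_norm M p f"
  proof
    fix f assume f: "f \<in> Lp_fun M p"
    have "(\<Sum>\<^sub>\<infinity>j\<in>J. Lp_norm L01 p (T f j) powr p) = (\<integral>x. \<bar>f x\<bar> powr p \<partial>M)"
      using hs[OF f] by (rule infsumI)
    then show "lp_Lp01_norm J p (T f) = Lp_norm M p f" unfolding lp_Lp01_norm_def Lp_norm_def by simp
  qed
  have LpAE: "Lp_norm L01 p g1 = Lp_norm L01 p g2"
    if "g1 \<in> borel_measurable L01" "g2 \<in> borel_measurable L01" "AE t in L01. g1 t = g2 t" for g1 g2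
  proof -
    have "(\<integral>t. \<bar>g1 t\<bar> powr p \<partial>L01) = (\<integral>t. \<bar>g2 t\<bar> powr p \<partial>L01)"
      using that by (intro integral_cong_AE) (auto elim!: AE_mp)
    then show ?thesis by (simp add: Lp_norm_def)
  qed
  have zeroAE: "AE t in L01. g t = 0" if g: "g \<in> Lp_fun L01 p" "Lp_norm L01 p g = 0" for g
  proof -
    have "(\<integral>t. \<bar>g t\<bar> powr p \<partial>L01) = 0" using g(2) p powr_Lp_norm[of p L01 g] by simp
    then have "AE t in L01. \<bar>g t\<bar> powr p = 0" using g(1)
      by (subst (asm) integral_nonneg_eq_0_iff_AE) (auto simp: Lp_fun_def)
    then show ?thesis by eventually_elim simp
  qed
  have Z: "AE t in L01. TT j f t = TT j g t"
    if j: "j \<in> J" and f: "f \<in> Lp_fun (R j) p" and g: "g \<in> Lp_fun (R j) p" and fg: "AE x in R j. f x = g x" for j f g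
  proof -
    have lin: "AE t in L01. TT j (\<lambda>x. 1 * f x + (-1) * g x) t = 1 * TT j f t + (-1) * TT j g t"
      by (rule TT2[OF j f g])
    have deq: "(\<lambda>x. 1 * f x + (-1) * g x) = (\<lambda>x. f x - g x)" by auto
    have dL: "(\<lambda>x. f x - g x) \<in> Lp_fun (R j) p" by (rule Lp_fun_diff[OF p f g])
    have "(\<integral>x. \<bar>f x - g x\<bar> powr p \<partial>R j) = (\<integral>x. 0 \<partial>R j)"
      using dL fg by (intro integral_cong_AE) (auto simp: Lp_fun_def elim!: AE_mp)
    then have "Lp_norm (R j) p (\<lambda>x. f x - g x) = 0" by (simp add: Lp_norm_def)
    then have "Lp_norm L01 p (TT j (\<lambda>x. f x - g x)) = 0" using TT3[OF j dL] by simp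
    then have "AE t in L01. TT j (\<lambda>x. f x - g x) t = 0" by (intro zeroAE TT1[OF j dL])
    then show ?thesis using lin unfolding deq by eventually_elim simp
  qed
  have Zero: "AE t in L01. TT j (\<lambda>x. 0) t = 0" if j: "j \<in> J" for j
  proof -
    have zL: "(\<lambda>x. 0::real) \<in> Lp_fun (R j) p" by (simp add: Lp_fun_def)
    have "AE t in L01. TT j (\<lambda>x. 0 * 0 + 0 * 0) t = 0 * TT j (\<lambda>x. 0) t + 0 * TT j (\<lambda>x. 0) t"
      by (rule TT2[OF j zL zL])
    then show ?thesis by simp
  qed
  have I4: "\<forall>G\<in>lp_Lp01 J p. \<exists>f\<in>Lp_fun M p. lp_eq J (T f) G"
  proof
    fix G assume G: "G \<in> lp_Lp01 J p"
    have GL: "\<And>j. j \<in> J \<Longrightarrow> G j \<in> Lp_fun L01 p" using G by (auto simp: lp_Lp01_def)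
    define aG where "aG j = Lp_norm L01 p (G j) powr p" for j
    have Gs: "aG summable_on J" using G unfolding lp_Lp01_def aG_def[abs_def] by auto
    have aG0: "0 \<le> aG j" for j by (simp add: aG_def)
    define J1 where "J1 = {j\<in>J. aG j \<noteq> 0}"
    have cJ1: "countable J1" unfolding J1_def using summable_countable_real[OF Gs] .
    have "\<forall>j\<in>J. \<exists>g. g \<in> Lp_fun (R j) p \<and> (AE t in L01. TT j g t = G j t)" using TT4 GL by blast
    from bchoice[OF this] obtain ff where ffL: "\<And>j. j \<in> J \<Longrightarrow> ff j \<in> Lp_fun (R j) p"
      and ffG: "\<And>j. j \<in> J \<Longrightarrow> AE t in L01. TT j (ff j) t = G j t" by blast
    have ffn: "(\<integral>x. \<bar>ff j x\<bar> powr p \<partial>R j) = aG j" if j: "j \<in> J" for j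
    proof -
      have "(\<integral>x. \<bar>ff j x\<bar> powr p \<partial>R j) = Lp_norm (R j) p (ff j) powr p" using p by (simp add: powr_Lp_norm)
      also have "\<dots> = Lp_norm L01 p (TT j (ff j)) powr p" using TT3[OF j ffL[OF j]] by simp
      also have "Lp_norm L01 p (TT j (ff j)) = Lp_norm L01 p (G j)"
        using TT1[OF j ffL[OF j]] GL[OF j] ffG[OF j] by (intro LpAE) (auto simp: Lp_fun_def)
      finally show ?thesis by (simp add: aG_def)
    qed
    obtain f where fL: "f \<in> Lp_fun M p" and f1: "\<forall>j\<in>J1. AE x in R j. f x = ff j x"
      and f2: "\<forall>j\<in>J-J1. AE x in R j. f x = 0"
    proof -
      have J1J: "J1 \<subseteq> J" by (auto simp: J1_def)
      have "\<And>j. j \<in> J1 \<Longrightarrow> ff j \<in> Lp_fun (restrict_space M (Xs j)) p" using ffL J1J unfolding R_def by auto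
      moreover have "\<And>j. j \<in> J1 \<Longrightarrow> (\<integral>x. \<bar>ff j x\<bar> powr p \<partial>restrict_space M (Xs j)) = aG j"
        using ffn J1J unfolding R_def by auto
      ultimately have "\<exists>f\<in>Lp_fun M p. (\<forall>j\<in>J1. AE x in restrict_space M (Xs j). f x = ff j x) \<and>
            (\<forall>j\<in>J-J1. AE x in restrict_space M (Xs j). f x = 0)"
        by (intro glue[OF p XsM disj J1J cJ1 _ _ Gs aG0]) auto
      then show ?thesis using that unfolding R_def by blast
    qed
    have "AE t in L01. T f j t = G j t" if j: "j \<in> J" for j
    proof (cases "j \<in> J1")
      case True
      have "AE t in L01. TT j f t = TT j (ff j) t"
        using Z[OF j LR[OF fL j] ffL[OF j]] f1 True by blast
      then show ?thesis using ffG[OF j] unfolding T_def by eventually_elim simp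
    next
      case False
      have zL: "(\<lambda>x. 0::real) \<in> Lp_fun (R j) p" by (simp add: Lp_fun_def)
      have "AE t in L01. TT j f t = TT j (\<lambda>x. 0) t"
        using Z[OF j LR[OF fL j] zL] f2 False j by blast
      moreover have "AE t in L01. G j t = 0"
      proof (rule zeroAE[OF GL[OF j]])
        have "aG j = 0" using False j by (simp add: J1_def)
        then show "Lp_norm L01 p (G j) = 0" using p by (simp add: aG_def)
      qed
      ultimately show ?thesis using Zero[OF j] unfolding T_def by eventually_elim simp
    qed
    then show "\<exists>f\<in>Lp_fun M p. lp_eq J (T f) G" using fL unfolding lp_eq_def by blast
  qed
  show ?thesis unfolding isometric_iso_Lp_lp_def using I1 I2 I3 I4 by blast
qed



theorem theorem4p3:
  fixes M :: "'a measure" and J :: "'i set" and Xs :: "'i \<Rightarrow> 'a set" and p :: real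
  assumes "1 \<le> p"
    and "relatively_nonatomic M"
    and "separable_partition M J Xs"
  shows "\<exists>T. isometric_iso_Lp_lp M J p T"
  using main[OF assms] .

end
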